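(* Consider the closed-loop system described in the context. For every $k\ge0$, $\tau_p\ge0$, $x_0\in\mathbb{R}^n$, $\delta>0$, $u_0\in U_\delta$ and every constant $r\in\mathbb{R}$ there exists $\tau\in(0,\infty]$ such that the closed-loop system has a unique state trajectory $(x,u_I)$ defined on $[0,\tau)$ with $x(0)=x_0$ and $u_I(0)=u_0$. If $\tau$ is finite and maximal (i.e., the state trajectory cannot be continued beyond $\tau$), then $\limsup_{t\to\tau}\|x(t)\|=\infty$.
   Context: Plant: $\dot x=f(x,u)$, $y=g(x)$, with $f\in C^2(\mathbb{R}^n\times\mathbb{R};\mathbb{R}^n)$ and $g:\mathbb{R}^n\to\mathbb{R}$ locally Lipschitz (Lipschitz on every compact set). Fix real numbers $u_{min}<u_{max}$, $U=[u_{min},u_{max}]$ and $U_\delta=[u_{min}-\delta,u_{max}+\delta]$. For $w\in\mathbb{R}$, $w^+=\max\{w,0\}$, $w^-=\min\{w,0\}$. Saturating integrator with input $w$ and state $u_I$: $\dot u_I=\mathscr{S}(u_I,w)$, where $\mathscr{S}(u_I,w)=w^+$ if $u_I\le u_{min}$, $w$ if $u_I\in(u_{min},u_{max})$, $w^-$ if $u_I\ge u_{max}$. For polynomial inputs the state trajectory is defined classically; two trajectories $u_1,u_2$ with inputs $w_1,w_2$ satisfy $|u_2(t)-u_1(t)|\le|u_2(0)-u_1(0)|+\int_0^t|w_2-w_1|\,d\sigma$, and for general $w\in L^1[0,t]$ the trajectory is defined by continuous extension. The closed-loop system (with gains $k$, $\tau_p$ and constant reference $r$) is $\dot x=f(x,u_I+\tau_pk(r-g(x)))$,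 $\dot u_I=\mathscr{S}(u_I,k(r-g(x)))$, where the second equation means that $u_I$ is the state trajectory of the saturating integrator driven by $w=k(r-g(x))$. *)

theory Defs
  imports "HOL-Analysis.Analysis" "HOL-Computational_Algebra.Polynomial"
begin

definition sat_S :: "real \<Rightarrow> real \<Rightarrow> real \<Rightarrow> real \<Rightarrow> real" where
  "sat_S umin umax v w =
     (if v \<le> umin then max w 0 else if v < umax then w else min w 0)"

definition sat_poly_traj ::
  "real \<Rightarrow> real \<Rightarrow> real \<Rightarrow> real \<Rightarrow> (real \<Rightarrow> real) \<Rightarrow> (real \<Rightarrow> real) \<Rightarrow> bool" where
  "sat_poly_traj umin umax T u0 p v \<longleftrightarrow>
     v 0 = u0 \<and> continuous_on {0..T} v \<and>
     (\<forall>s\<in>{0..<T}. (v has_real_derivative sat_S umin umax (v s) (p s)) (at s within {s..T}))"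

text \<open>State trajectory on [0,T] for an L^1 input w, defined by continuous extension
  (in the L^1[0,T] topology) of the map from polynomial inputs to their classical
  trajectories (uniform topology on [0,T]).\<close>
definition sat_traj_on ::
  "real \<Rightarrow> real \<Rightarrow> real \<Rightarrow> real \<Rightarrow> (real \<Rightarrow> real) \<Rightarrow> (real \<Rightarrow> real) \<Rightarrow> bool" where
  "sat_traj_on umin umax T u0 w u \<longleftrightarrow>
     w absolutely_integrable_on {0..T} \<and>
     (\<forall>\<epsilon>>0. \<exists>\<eta>>0. \<forall>(q::real poly) v.
        sat_poly_traj umin umax T u0 (poly q) v \<and>
        integral {0..T} (\<lambda>s. \<bar>poly q s - w s\<bar>) < \<eta> \<longrightarrow>
        (\<forall>s\<in>{0..T}. \<bar>v s - u s\<bar> < \<epsilon>))"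

definition cl_traj ::
  "(((real^'n) \<times> real) \<Rightarrow> real^'n) \<Rightarrow> (real^'n \<Rightarrow> real) \<Rightarrow> real \<Rightarrow> real \<Rightarrow>
   real \<Rightarrow> real \<Rightarrow> real \<Rightarrow> real^'n \<Rightarrow> real \<Rightarrow> ereal \<Rightarrow>
   (real \<Rightarrow> real^'n) \<Rightarrow> (real \<Rightarrow> real) \<Rightarrow> bool" where
  "cl_traj f g umin umax k \<tau>p r x0 u0 \<tau> x u \<longleftrightarrow>
     x 0 = x0 \<and> u 0 = u0 \<and>
     (\<forall>t. 0 \<le> t \<and> ereal t < \<tau> \<longrightarrow>
        (x has_vector_derivative f (x t, u t + \<tau>p * k * (r - g (x t))))
          (at t within {s. 0 \<le> s \<and> ereal s < \<tau>})) \<and>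
     (\<forall>t. 0 \<le> t \<and> ereal t < \<tau> \<longrightarrow>
        sat_traj_on umin umax t u0 (\<lambda>s. k * (r - g (x s))) u)"

end

theory Submission
  imports Defs
begin


lemma satS_mono:
  assumes "v1 \<le> v2"
  shows "sat_S umin umax v2 w \<le> sat_S umin umax v1 w"
  using assms unfolding sat_S_def by auto

lemma satS_lip:
  shows "\<bar>sat_S umin umax v w1 - sat_S umin umax v w2\<bar> \<le> \<bar>w1 - w2\<bar>"
  unfolding sat_S_def by auto

lemma deriv_approx:
  fixes F :: "real \<Rightarrow> real"
  assumes "(F has_real_derivative D) (at s within {s..T})" "e > 0"
  shows "\<exists>d>0. \<forall>t. s < t \<and> t < s + d \<and> t \<le> T \<longrightarrow> \<bar>F t - F s - D * (t - s)\<bar> \<le> e * (t - s)"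
proof -
  have "((\<lambda>y. (F y - F s) / (y - s)) \<longlongrightarrow> D) (at s within {s..T})"
    using assms(1) has_field_derivative_iff by blast
  then obtain d where d: "d > 0" and
    H: "\<And>y. y \<in> {s..T} \<Longrightarrow> 0 < dist y s \<Longrightarrow> dist y s < d \<Longrightarrow> dist ((F y - F s) / (y - s)) D < e"
    using assms(2) unfolding Lim_within by meson
  show ?thesis
  proof (intro exI[of _ d] conjI allI impI d)
    fix t assume t: "s < t \<and> t < s + d \<and> t \<le> T"
    then have "dist ((F t - F s) / (t - s)) D < e" using H[of t] by (auto simp: dist_real_def)
    then have "\<bar>(F t - F s) / (t - s) - D\<bar> \<le> e" by (simp add: dist_real_def)
    then have "\<bar>((F t - F s) / (t - s) - D) * (t - s)\<bar> \<le> e * (t - s)"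
      using t by (simp add: abs_mult)
    moreover have "((F t - F s) / (t - s) - D) * (t - s) = F t - F s - D * (t - s)"
      using t by (simp add: field_simps)
    ultimately show "\<bar>F t - F s - D * (t - s)\<bar> \<le> e * (t - s)" by simp
  qed
qed

lemma dini_mono_aux:
  fixes \<phi> :: "real \<Rightarrow> real"
  assumes ab: "a \<le> b" and cont: "continuous_on {a..b} \<phi>"
    and D: "\<And>s e. s \<in> {a..<b} \<Longrightarrow> e > 0 \<Longrightarrow>
            \<exists>d>0. \<forall>t. s < t \<and> t < s + d \<and> t \<le> b \<longrightarrow> \<phi> t - \<phi> s \<le> e * (t - s)"
  shows "\<phi> b \<le> \<phi> a"
proof (rule ccontr)
  assume neg: "\<not> \<phi> b \<le> \<phi> a"
  then have ab': "a < b" using ab by (cases "a = b") auto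
  define e where "e = (\<phi> b - \<phi> a) / (2 * (b - a))"
  have e: "e > 0" using neg ab' by (simp add: e_def)
  define A where "A = {a..b} \<inter> (\<lambda>t. \<phi> t - e * (t - a)) -` {..\<phi> a}"
  have clA: "closed A" unfolding A_def
    by (rule continuous_closed_preimage) (auto intro!: continuous_intros cont)
  have aA: "a \<in> A" using ab by (auto simp: A_def)
  have bdd: "bdd_above A" by (auto simp: A_def bdd_above_def)
  define c where "c = Sup A"
  have cA: "c \<in> A" unfolding c_def using closed_contains_Sup[OF _ bdd clA] aA by auto
  then have c1: "a \<le> c" "c \<le> b" and c2: "\<phi> c \<le> \<phi> a + e * (c - a)" by (auto simp: A_def)
  show False
  proof (cases "c = b")
    case True
    then have "\<phi> b \<le> \<phi> a + e * (b - a)" using c2 by simp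
    moreover have "e * (b - a) = (\<phi> b - \<phi> a) / 2" using ab' by (simp add: e_def field_simps)
    ultimately have "\<phi> b - \<phi> a \<le> (\<phi> b - \<phi> a) / 2" by linarith
    then show False using neg by (simp add: field_simps)
  next
    case False
    then have cb: "c < b" using c1 by simp
    obtain d where d: "d > 0" and H: "\<forall>t. c < t \<and> t < c + d \<and> t \<le> b \<longrightarrow> \<phi> t - \<phi> c \<le> e * (t - c)"
      using D[of c e] cb c1 e by auto
    define t where "t = min (c + d/2) b"
    have t: "c < t" "t < c + d" "t \<le> b" using d cb by (auto simp: t_def)
    have "\<phi> t - \<phi> c \<le> e * (t - c)" using H t by auto
    then have "\<phi> t \<le> \<phi> a + e * (t - a)" using c2 by (simp add: algebra_simps)
    then have "t \<in> A" using t c1 by (auto simp: A_def)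
    then have "t \<le> c" unfolding c_def using bdd by (rule cSup_upper)
    then show False using t by simp
  qed
qed

lemma dini_mono:
  fixes \<phi> :: "real \<Rightarrow> real"
  assumes cont: "continuous_on {a..b} \<phi>"
    and D: "\<And>s e. s \<in> {a..<b} \<Longrightarrow> e > 0 \<Longrightarrow>
            \<exists>d>0. \<forall>t. s < t \<and> t < s + d \<and> t \<le> b \<longrightarrow> \<phi> t - \<phi> s \<le> e * (t - s)"
    and t: "t \<in> {a..b}"
  shows "\<phi> t \<le> \<phi> a"
proof (rule dini_mono_aux[of a t \<phi>])
  show "a \<le> t" using t by simp
  show "continuous_on {a..t} \<phi>" using t by (intro continuous_on_subset[OF cont]) auto
  fix s e assume s: "s \<in> {a..<t}" and e: "(e::real) > 0"
  then obtain d where "d > 0" and d: "\<forall>t'. s < t' \<and> t' < s + d \<and> t' \<le> b \<longrightarrow> \<phi> t' - \<phi> s \<le> e * (t' - s)"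
    using D[of s e] t by auto
  then show "\<exists>d>0. \<forall>t'. s < t' \<and> t' < s + d \<and> t' \<le> t \<longrightarrow> \<phi> t' - \<phi> s \<le> e * (t' - s)"
  proof (intro exI[of _ d] conjI allI impI)
    show "d > 0" by fact
    fix t' assume "s < t' \<and> t' < s + d \<and> t' \<le> t"
    then show "\<phi> t' - \<phi> s \<le> e * (t' - s)" using d t by auto
  qed
qed

lemma abs_step:
  fixes x0 x1 D h \<tau> \<epsilon> :: real
  assumes a: "\<bar>x1 - x0 - D*\<tau>\<bar> \<le> \<epsilon>*\<tau>" and t: "\<tau> > 0" "\<epsilon> \<ge> 0"
    and p: "x0 > 0 \<Longrightarrow> D \<le> h" and n: "x0 < 0 \<Longrightarrow> -D \<le> h" and z: "x0 = 0 \<Longrightarrow> \<bar>D\<bar> \<le> h"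
    and s: "x0 \<noteq> 0 \<Longrightarrow> (\<bar>D\<bar> + \<epsilon>)*\<tau> < \<bar>x0\<bar>"
  shows "\<bar>x1\<bar> - \<bar>x0\<bar> \<le> (h + \<epsilon>)*\<tau>"
proof -
  have e1: "\<bar>D*\<tau>\<bar> = \<bar>D\<bar>*\<tau>" using t by (simp add: abs_mult)
  consider "x0 > 0" | "x0 < 0" | "x0 = 0" by linarith
  then show ?thesis
  proof cases
    case 1
    have "D*\<tau> \<le> h*\<tau>" using p[OF 1] t by (simp add: mult_right_mono)
    moreover have "(\<bar>D\<bar> + \<epsilon>)*\<tau> < x0" using s 1 by simp
    ultimately show ?thesis using a 1 e1 by (simp add: algebra_simps abs_if split: if_splits)
  next
    case 2
    have "(-D)*\<tau> \<le> h*\<tau>" using n[OF 2] t by (intro mult_right_mono) auto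
    moreover have "(\<bar>D\<bar> + \<epsilon>)*\<tau> < -x0" using s 2 by simp
    ultimately show ?thesis using a 2 e1 by (simp add: algebra_simps abs_if split: if_splits)
  next
    case 3
    have "\<bar>D\<bar>*\<tau> \<le> h*\<tau>" using z[OF 3] t by (simp add: mult_right_mono)
    then show ?thesis using a 3 e1 by (simp add: algebra_simps abs_if split: if_splits)
  qed
qed

lemma sat_lip:
  fixes v1 v2 p1 p2 :: "real \<Rightarrow> real"
  assumes cv1: "continuous_on {0..T} v1" and cv2: "continuous_on {0..T} v2"
    and cp1: "continuous_on {0..T} p1" and cp2: "continuous_on {0..T} p2"
    and init: "v1 0 = v2 0"
    and d1: "\<And>s. s \<in> {0..<T} \<Longrightarrow> (v1 has_real_derivative sat_S umin umax (v1 s) (p1 s)) (at s within {s..T})"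
    and d2: "\<And>s. s \<in> {0..<T} \<Longrightarrow> (v2 has_real_derivative sat_S umin umax (v2 s) (p2 s)) (at s within {s..T})"
    and t: "t \<in> {0..T}"
  shows "\<bar>v1 t - v2 t\<bar> \<le> integral {0..t} (\<lambda>\<sigma>. \<bar>p1 \<sigma> - p2 \<sigma>\<bar>)"
proof -
  define h where "h = (\<lambda>\<sigma>. \<bar>p1 \<sigma> - p2 \<sigma>\<bar>)"
  have ch: "continuous_on {0..T} h" unfolding h_def by (intro continuous_intros cp1 cp2)
  define I where "I = (\<lambda>t. integral {0..t} h)"
  define \<phi> where "\<phi> = (\<lambda>t. \<bar>v1 t - v2 t\<bar> - I t)"
  have cI: "continuous_on {0..T} I" unfolding I_def
    by (rule indefinite_integral_continuous_1) (rule integrable_continuous_real[OF ch])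
  have "\<phi> t \<le> \<phi> 0"
  proof (rule dini_mono[of 0 T \<phi>])
    show "continuous_on {0..T} \<phi>" unfolding \<phi>_def by (intro continuous_intros cv1 cv2 cI)
    show "t \<in> {0..T}" by fact
    fix s e assume s: "s \<in> {0..<T}" and e: "(e::real) > 0"
    define d where "d = (\<lambda>t. v1 t - v2 t)"
    define D where "D = sat_S umin umax (v1 s) (p1 s) - sat_S umin umax (v2 s) (p2 s)"
    have dd: "(d has_real_derivative D) (at s within {s..T})"
      unfolding d_def D_def by (intro DERIV_diff d1 d2 s)
    have dI: "(I has_real_derivative h s) (at s within {s..T})"
    proof -
      have "(I has_real_derivative h s) (at s within {0..T})"
        unfolding I_def using s by (intro integral_has_real_derivative ch) auto
      then show ?thesis by (rule DERIV_subset) (use s in auto)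
    qed
    obtain \<delta>1 where \<delta>1: "\<delta>1 > 0" "\<forall>t. s < t \<and> t < s + \<delta>1 \<and> t \<le> T \<longrightarrow> \<bar>d t - d s - D * (t - s)\<bar> \<le> (e/2) * (t - s)"
      using deriv_approx[OF dd, of "e/2"] e by auto
    obtain \<delta>2 where \<delta>2: "\<delta>2 > 0" "\<forall>t. s < t \<and> t < s + \<delta>2 \<and> t \<le> T \<longrightarrow> \<bar>I t - I s - h s * (t - s)\<bar> \<le> (e/2) * (t - s)"
      using deriv_approx[OF dI, of "e/2"] e by auto
    define \<delta>3 where "\<delta>3 = (if d s = 0 then 1 else \<bar>d s\<bar> / (\<bar>D\<bar> + e/2))"
    have \<delta>3: "\<delta>3 > 0" using e by (auto simp: \<delta>3_def)
    have hp: "d s > 0 \<Longrightarrow> D \<le> h s"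
    proof -
      assume "d s > 0"
      then have "sat_S umin umax (v1 s) (p1 s) \<le> sat_S umin umax (v2 s) (p1 s)"
        by (intro satS_mono) (simp add: d_def)
      moreover have "\<bar>sat_S umin umax (v2 s) (p1 s) - sat_S umin umax (v2 s) (p2 s)\<bar> \<le> h s"
        unfolding h_def by (rule satS_lip)
      ultimately show "D \<le> h s" unfolding D_def by linarith
    qed
    have hn: "d s < 0 \<Longrightarrow> -D \<le> h s"
    proof -
      assume "d s < 0"
      then have "sat_S umin umax (v2 s) (p2 s) \<le> sat_S umin umax (v1 s) (p2 s)"
        by (intro satS_mono) (simp add: d_def)
      moreover have "\<bar>sat_S umin umax (v1 s) (p1 s) - sat_S umin umax (v1 s) (p2 s)\<bar> \<le> h s"
        unfolding h_def by (rule satS_lip)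
      ultimately show "-D \<le> h s" unfolding D_def by linarith
    qed
    have hz: "d s = 0 \<Longrightarrow> \<bar>D\<bar> \<le> h s"
    proof -
      assume "d s = 0"
      then have "v2 s = v1 s" by (simp add: d_def)
      then show "\<bar>D\<bar> \<le> h s" unfolding D_def h_def using satS_lip by simp
    qed
    show "\<exists>\<delta>>0. \<forall>t. s < t \<and> t < s + \<delta> \<and> t \<le> T \<longrightarrow> \<phi> t - \<phi> s \<le> e * (t - s)"
    proof (intro exI[of _ "min \<delta>1 (min \<delta>2 \<delta>3)"] conjI allI impI)
      show "min \<delta>1 (min \<delta>2 \<delta>3) > 0" using \<delta>1 \<delta>2 \<delta>3 by simp
      fix t assume t: "s < t \<and> t < s + min \<delta>1 (min \<delta>2 \<delta>3) \<and> t \<le> T"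
      have A: "\<bar>d t - d s - D * (t - s)\<bar> \<le> (e/2) * (t - s)" using \<delta>1 t by auto
      have B: "\<bar>I t - I s - h s * (t - s)\<bar> \<le> (e/2) * (t - s)" using \<delta>2 t by auto
      have C: "d s \<noteq> 0 \<Longrightarrow> (\<bar>D\<bar> + e/2) * (t - s) < \<bar>d s\<bar>"
      proof -
        assume ds: "d s \<noteq> 0"
        have "t - s < \<delta>3" using t by auto
        then have "t - s < \<bar>d s\<bar> / (\<bar>D\<bar> + e/2)" using ds by (simp add: \<delta>3_def)
        then show ?thesis using e by (simp add: field_simps)
      qed
      have "\<bar>d t\<bar> - \<bar>d s\<bar> \<le> (h s + e/2) * (t - s)"
        by (rule abs_step[OF A]) (use t e hp hn hz C in auto)
      moreover have "I t - I s \<ge> (h s - e/2) * (t - s)"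
      proof -
        have "-((e/2) * (t - s)) \<le> I t - I s - h s * (t - s)" using B by (simp only: abs_le_iff) linarith
        then show ?thesis by (simp add: left_diff_distrib)
      qed
      ultimately have "(\<bar>d t\<bar> - \<bar>d s\<bar>) - (I t - I s) \<le> (h s + e/2) * (t - s) - (h s - e/2) * (t - s)"
        by linarith
      also have "\<dots> = e * (t - s)" by (simp add: field_simps)
      finally show "\<phi> t - \<phi> s \<le> e * (t - s)"
        unfolding \<phi>_def d_def by simp
    qed
  qed
  moreover have "\<phi> 0 = 0" unfolding \<phi>_def I_def using init by simp
  ultimately show ?thesis unfolding \<phi>_def I_def h_def by simp
qed



definition ctraj :: "real \<Rightarrow> real \<Rightarrow> real \<Rightarrow> real \<Rightarrow> real \<Rightarrow> (real \<Rightarrow> real) \<Rightarrow> (real \<Rightarrow> real) \<Rightarrow> bool" where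
  "ctraj umin umax a b u0 p v \<longleftrightarrow> v a = u0 \<and> continuous_on {a..b} v \<and>
     (\<forall>s\<in>{a..<b}. (v has_real_derivative sat_S umin umax (v s) (p s)) (at s within {s..b}))"

lemma integral_mono_upper:
  fixes p :: "real \<Rightarrow> real"
  assumes "continuous_on {a..b} p" "\<And>t. t \<in> {a..b} \<Longrightarrow> p t \<ge> 0" "a \<le> s" "s \<le> t" "t \<le> b"
  shows "integral {a..s} p \<le> integral {a..t} p"
proof -
  have int: "p integrable_on {a..t}"
    by (rule integrable_continuous_real) (rule continuous_on_subset[OF assms(1)], use assms in auto)
  have "integral {a..s} p + integral {s..t} p = integral {a..t} p"
    by (rule Henstock_Kurzweil_Integration.integral_combine[OF assms(3,4) int])
  moreover have "integral {s..t} p \<ge> 0"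
    by (rule integral_nonneg) (rule integrable_on_subinterval[OF int], use assms in auto)
  ultimately show ?thesis by linarith
qed

lemma ctraj_plus:
  fixes p :: "real \<Rightarrow> real"
  assumes um: "umin < umax" and ab: "a \<le> b" and cp: "continuous_on {a..b} p"
    and pos: "\<And>t. t \<in> {a..b} \<Longrightarrow> p t \<ge> 0"
  shows "\<exists>v. ctraj umin umax a b u0 p v"
proof (cases "u0 \<ge> umax")
  case True
  have "ctraj umin umax a b u0 p (\<lambda>_. u0)"
    unfolding ctraj_def
  proof (intro conjI ballI)
    fix s assume s: "s \<in> {a..<b}"
    have "sat_S umin umax u0 (p s) = 0" using True um pos[of s] s by (auto simp: sat_S_def)
    then show "((\<lambda>_. u0) has_real_derivative sat_S umin umax u0 (p s)) (at s within {s..b})"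
      by simp
  qed auto
  then show ?thesis by blast
next
  case False
  define h where "h = (\<lambda>t. u0 + integral {a..t} p)"
  have ch: "continuous_on {a..b} h" unfolding h_def
    by (intro continuous_intros indefinite_integral_continuous_1 integrable_continuous_real cp)
  have hmono: "\<And>s t. a \<le> s \<Longrightarrow> s \<le> t \<Longrightarrow> t \<le> b \<Longrightarrow> h s \<le> h t"
    unfolding h_def using integral_mono_upper[OF cp pos] by auto
  define v where "v = (\<lambda>t. min umax (h t))"
  have "ctraj umin umax a b u0 p v"
    unfolding ctraj_def
  proof (intro conjI ballI)
    show "v a = u0" using False by (simp add: v_def h_def)
    show "continuous_on {a..b} v" unfolding v_def by (intro continuous_intros ch)
    fix s assume s: "s \<in> {a..<b}"
    have dh: "(h has_real_derivative p s) (at s within {s..b})"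
    proof -
      have "((\<lambda>t. integral {a..t} p) has_real_derivative p s) (at s within {a..b})"
        by (rule integral_has_real_derivative[OF cp]) (use s in auto)
      from DERIV_add[OF DERIV_const this, of u0]
      have "(h has_real_derivative p s) (at s within {a..b})" unfolding h_def by simp
      then show ?thesis by (rule DERIV_subset) (use s in auto)
    qed
    show "(v has_real_derivative sat_S umin umax (v s) (p s)) (at s within {s..b})"
    proof (cases "h s < umax")
      case True
      obtain d where d: "d > 0" "\<forall>t\<in>{a..b}. dist t s < d \<longrightarrow> dist (h t) (h s) < umax - h s"
        using ch s True unfolding continuous_on_iff by (metis atLeastLessThan_iff atLeastAtMost_iff less_eq_real_def diff_gt_0_iff_gt)
      have "(v has_real_derivative p s) (at s within {s..b})"
      proof (rule has_field_derivative_transform_within[OF dh d(1)])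
        show "s \<in> {s..b}" using s by auto
        fix t assume t: "t \<in> {s..b}" "dist t s < d"
        then have "dist (h t) (h s) < umax - h s" using d(2) s by auto
        then have "h t < umax" by (simp add: dist_real_def)
        then show "h t = v t" by (simp add: v_def)
      qed
      moreover have "sat_S umin umax (v s) (p s) = p s"
        using True pos[of s] s by (auto simp: sat_S_def v_def)
      ultimately show ?thesis by simp
    next
      case False
      have "((\<lambda>_. umax) has_real_derivative 0) (at s within {s..b})" by simp
      then have "(v has_real_derivative 0) (at s within {s..b})"
      proof (rule has_field_derivative_transform_within[where d=1])
        show "s \<in> {s..b}" using s by auto
        fix t assume t: "t \<in> {s..b}" "dist t s < 1"
        then have "h s \<le> h t" using s by (intro hmono) auto
        then show "umax = v t" using False by (simp add: v_def)
      qed auto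
      moreover have "sat_S umin umax (v s) (p s) = 0"
        using False pos[of s] s um by (auto simp: sat_S_def v_def)
      ultimately show ?thesis by simp
    qed
  qed
  then show ?thesis by blast
qed

lemma satS_neg:
  assumes "umin < umax"
  shows "sat_S (-umax) (-umin) (-x) (-w) = - sat_S umin umax x w"
  using assms unfolding sat_S_def by auto

lemma ctraj_neg:
  assumes um: "umin < umax" and "ctraj (-umax) (-umin) a b (-u0) (\<lambda>t. - p t) v"
  shows "ctraj umin umax a b u0 p (\<lambda>t. - v t)"
  unfolding ctraj_def
proof (intro conjI ballI)
  show "- v a = u0" using assms(2) by (simp add: ctraj_def)
  show "continuous_on {a..b} (\<lambda>t. - v t)" using assms(2) by (intro continuous_intros) (simp add: ctraj_def)
  fix s assume s: "s \<in> {a..<b}"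
  have "(v has_real_derivative sat_S (-umax) (-umin) (v s) (- p s)) (at s within {s..b})"
    using assms(2) s by (simp add: ctraj_def)
  then have "((\<lambda>t. - v t) has_real_derivative - sat_S (-umax) (-umin) (v s) (- p s)) (at s within {s..b})"
    by (rule DERIV_minus)
  moreover have "sat_S (-umax) (-umin) (v s) (- p s) = - sat_S umin umax (- v s) (p s)"
    using satS_neg[OF um, of "- v s" "p s"] by simp
  ultimately show "((\<lambda>t. - v t) has_real_derivative sat_S umin umax (- v s) (p s)) (at s within {s..b})"
    by simp
qed

lemma ctraj_minus:
  fixes p :: "real \<Rightarrow> real"
  assumes um: "umin < umax" and ab: "a \<le> b" and cp: "continuous_on {a..b} p"
    and neg: "\<And>t. t \<in> {a..b} \<Longrightarrow> p t \<le> 0"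
  shows "\<exists>v. ctraj umin umax a b u0 p v"
proof -
  have "\<exists>v. ctraj (-umax) (-umin) a b (-u0) (\<lambda>t. - p t) v"
    by (rule ctraj_plus) (use um ab neg in \<open>auto intro!: continuous_intros cp\<close>)
  then obtain v where "ctraj (-umax) (-umin) a b (-u0) (\<lambda>t. - p t) v" by blast
  then show ?thesis using ctraj_neg[OF um] by blast
qed

lemma ctraj_glue:
  assumes ac: "a \<le> c" and cb: "c \<le> b"
    and v1: "ctraj umin umax a c u0 p v1" and v2: "ctraj umin umax c b (v1 c) p v2"
  shows "ctraj umin umax a b u0 p (\<lambda>t. if t \<le> c then v1 t else v2 t)"
  unfolding ctraj_def
proof (intro conjI ballI)
  show "(if a \<le> c then v1 a else v2 a) = u0" using ac v1 by (simp add: ctraj_def)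
  have e1: "{x \<in> {a..b}. x \<le> c} = {a..c}" using cb by auto
  have e2: "{x \<in> {a..b}. c \<le> x} = {c..b}" using ac by auto
  have c1: "continuous_on {x \<in> {a..b}. x \<le> c} v1" unfolding e1 using v1 by (simp add: ctraj_def)
  have c2: "continuous_on {x \<in> {a..b}. c \<le> x} v2" unfolding e2 using v2 by (simp add: ctraj_def)
  show "continuous_on {a..b} (\<lambda>t. if t \<le> c then v1 t else v2 t)"
    by (rule continuous_on_cases_le[OF c1 c2 continuous_on_id]) (use v2 in \<open>auto simp: ctraj_def\<close>)
  fix s assume s: "s \<in> {a..<b}"
  show "((\<lambda>t. if t \<le> c then v1 t else v2 t) has_real_derivative
          sat_S umin umax (if s \<le> c then v1 s else v2 s) (p s)) (at s within {s..b})"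
  proof (cases "s < c")
    case True
    have d1: "(v1 has_real_derivative sat_S umin umax (v1 s) (p s)) (at s within {s..c})"
      using v1 s True by (simp add: ctraj_def)
    have eq: "at s within {s..c} = at s within {s..b}"
      using True s by (simp add: at_within_Icc_at_right)
    have d1': "(v1 has_real_derivative sat_S umin umax (v1 s) (p s)) (at s within {s..b})"
      using d1 eq by simp
    have val: "(if s \<le> c then v1 s else v2 s) = v1 s" using True by simp
    show ?thesis unfolding val using d1'
    proof (rule has_field_derivative_transform_within[where d="c - s"])
      show "0 < c - s" using True by simp
      show "s \<in> {s..b}" using s by auto
      fix t assume "t \<in> {s..b}" "dist t s < c - s"
      then have "t \<le> c" by (auto simp: dist_real_def)
      then show "v1 t = (if t \<le> c then v1 t else v2 t)" by simp
    qed
  next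
    case False
    have d2: "(v2 has_real_derivative sat_S umin umax (v2 s) (p s)) (at s within {s..b})"
      using v2 s False by (simp add: ctraj_def)
    have val: "(if s \<le> c then v1 s else v2 s) = v2 s"
      using False v2 by (auto simp: ctraj_def)
    show ?thesis unfolding val
    proof (rule has_field_derivative_transform_within[OF d2, where d=1])
      show "s \<in> {s..b}" using s by auto
      fix t assume t: "t \<in> {s..b}" "dist t s < 1"
      show "v2 t = (if t \<le> c then v1 t else v2 t)"
      proof (cases "t \<le> c")
        case True
        then have "t = c" using t False by auto
        then show ?thesis using v2 by (simp add: ctraj_def)
      qed simp
    qed simp
  qed
qed


lemma poly_sign_const:
  fixes q :: "real poly"
  assumes ab: "a \<le> b" and nr: "\<And>x. a < x \<Longrightarrow> x < b \<Longrightarrow> poly q x \<noteq> 0"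
  shows "(\<forall>t\<in>{a..b}. poly q t \<ge> 0) \<or> (\<forall>t\<in>{a..b}. poly q t \<le> 0)"
proof (cases "a = b")
  case True
  then show ?thesis by (cases "poly q a \<ge> 0") auto
next
  case False
  define m where "m = (a + b) / 2"
  have m: "a < m" "m < b" using False ab by (auto simp: m_def)
  have pm: "poly q m \<noteq> 0" using nr m by auto
  have cont: "\<forall>x. isCont (poly q) x" by (simp add: poly_isCont)
  have key: "\<And>t. t \<in> {a..b} \<Longrightarrow> poly q t * poly q m \<ge> 0"
  proof (rule ccontr)
    fix t assume t: "t \<in> {a..b}" and n: "\<not> poly q t * poly q m \<ge> 0"
    then have tm: "t \<noteq> m" by auto
    have "\<exists>x. min t m \<le> x \<and> x \<le> max t m \<and> poly q x = 0"
    proof (cases "poly q t < 0")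
      case True
      then have pm': "poly q m > 0" using n mult_nonpos_nonpos[of "poly q t" "poly q m"] by linarith
      show ?thesis
      proof (cases "t \<le> m")
        case True
        then show ?thesis using IVT[of "poly q" t 0 m] cont \<open>poly q t < 0\<close> pm' by auto
      next
        case False
        then show ?thesis using IVT2[of "poly q" t 0 m] cont \<open>poly q t < 0\<close> pm' by auto
      qed
    next
      case False
      then have pt: "poly q t > 0" using n by (cases "poly q t = 0") auto
      then have pm': "poly q m < 0" using n mult_nonneg_nonneg[of "poly q t" "poly q m"] by linarith
      show ?thesis
      proof (cases "t \<le> m")
        case True
        then show ?thesis using IVT2[of "poly q" m 0 t] cont pt pm' by auto
      next
        case False
        then show ?thesis using IVT[of "poly q" m 0 t] cont pt pm' by auto
      qed
    qed
    then obtain x where x: "min t m \<le> x" "x \<le> max t m" "poly q x = 0" by blast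
    have "x \<noteq> t" using x n by auto
    moreover have "x \<noteq> m" using x pm by auto
    ultimately have "a < x" "x < b" using x t m by (auto simp: min_def max_def split: if_splits)
    then show False using nr x by auto
  qed
  show ?thesis
  proof (cases "poly q m > 0")
    case True
    then show ?thesis using key by (auto simp: zero_le_mult_iff)
  next
    case False
    then have "poly q m < 0" using pm by auto
    then show ?thesis using key by (auto simp: zero_le_mult_iff)
  qed
qed

lemma ctraj_poly:
  fixes q :: "real poly"
  assumes um: "umin < umax" and ab: "a \<le> b"
  shows "\<exists>v. ctraj umin umax a b u0 (poly q) v"
proof (cases "q = 0")
  case True
  show ?thesis by (rule ctraj_plus) (use um ab True in \<open>auto intro: continuous_intros\<close>)
next
  case False
  have fin: "finite {x. poly q x = 0}" using poly_roots_finite[OF False] .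
  have "\<forall>a b u0. a \<le> b \<longrightarrow> card {x. a < x \<and> x < b \<and> poly q x = 0} = n \<longrightarrow>
          (\<exists>v. ctraj umin umax a b u0 (poly q) v)" for n
  proof (induction n rule: less_induct)
    case (less n)
    show ?case
    proof (intro allI impI)
      fix a b u0 assume ab: "(a::real) \<le> b" and cn: "card {x. a < x \<and> x < b \<and> poly q x = 0} = n"
      have finR: "finite {x. a < x \<and> x < b \<and> poly q x = 0}"
        by (rule finite_subset[OF _ fin]) auto
      show "\<exists>v. ctraj umin umax a b u0 (poly q) v"
      proof (cases "{x. a < x \<and> x < b \<and> poly q x = 0} = {}")
        case True
        then have "(\<forall>t\<in>{a..b}. poly q t \<ge> 0) \<or> (\<forall>t\<in>{a..b}. poly q t \<le> 0)"
          by (intro poly_sign_const ab) auto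
        then show ?thesis
        proof
          assume "\<forall>t\<in>{a..b}. poly q t \<ge> 0"
          then show ?thesis by (intro ctraj_plus um ab) (auto intro: continuous_intros)
        next
          assume "\<forall>t\<in>{a..b}. poly q t \<le> 0"
          then show ?thesis by (intro ctraj_minus um ab) (auto intro: continuous_intros)
        qed
      next
        case False
        then obtain c where c: "a < c" "c < b" "poly q c = 0" by auto
        have lt1: "card {x. a < x \<and> x < c \<and> poly q x = 0} < n"
          unfolding cn[symmetric] by (rule psubset_card_mono[OF finR]) (use c in auto)
        have lt2: "card {x. c < x \<and> x < b \<and> poly q x = 0} < n"
          unfolding cn[symmetric] by (rule psubset_card_mono[OF finR]) (use c in auto)
        obtain v1 where v1: "ctraj umin umax a c u0 (poly q) v1"
          using less.IH[OF lt1, rule_format, of a c u0] c by auto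
        obtain v2 where v2: "ctraj umin umax c b (v1 c) (poly q) v2"
          using less.IH[OF lt2, rule_format, of c b "v1 c"] c by auto
        show ?thesis using ctraj_glue[OF _ _ v1 v2] c by auto
      qed
    qed
  qed
  then show ?thesis using ab by blast
qed

lemma sat_poly_traj_ctraj: "sat_poly_traj umin umax T u0 p v \<longleftrightarrow> ctraj umin umax 0 T u0 p v"
  unfolding sat_poly_traj_def ctraj_def by simp

lemma sat_poly_exists:
  assumes "umin < umax" "0 \<le> T"
  shows "\<exists>v. sat_poly_traj umin umax T u0 (poly q) v"
  using ctraj_poly[OF assms] unfolding sat_poly_traj_ctraj by blast



lemma rpf_poly:
  fixes g :: "real \<Rightarrow> real"
  assumes "real_polynomial_function g"
  shows "\<exists>q. \<forall>x. g x = poly q x"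
  using assms
proof (induction rule: real_polynomial_function.induct)
  case (linear f)
  then obtain c where "f = (\<lambda>x. x * c)" using real_bounded_linear by blast
  then show ?case by (intro exI[of _ "[:0, c:]"]) auto
next
  case (const c)
  then show ?case by (intro exI[of _ "[:c:]"]) auto
next
  case (add f g)
  then obtain q1 q2 where "\<forall>x. f x = poly q1 x" "\<forall>x. g x = poly q2 x" by blast
  then show ?case by (intro exI[of _ "q1 + q2"]) auto
next
  case (mult f g)
  then obtain q1 q2 where "\<forall>x. f x = poly q1 x" "\<forall>x. g x = poly q2 x" by blast
  then show ?case by (intro exI[of _ "q1 * q2"]) auto
qed

lemma poly_approx:
  fixes w :: "real \<Rightarrow> real"
  assumes "continuous_on {a..b} w" "e > 0"
  shows "\<exists>q. \<forall>x\<in>{a..b}. \<bar>poly q x - w x\<bar> < e"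
proof -
  obtain g where g: "real_polynomial_function g" "\<And>x. x \<in> {a..b} \<Longrightarrow> \<bar>w x - g x\<bar> < e"
    using Stone_Weierstrass_real_polynomial_function[OF compact_Icc assms] by blast
  obtain q where "\<forall>x. g x = poly q x" using rpf_poly[OF g(1)] by blast
  then show ?thesis using g(2) by (intro exI[of _ q]) (auto simp: abs_minus_commute)
qed

definition Ierr :: "real \<Rightarrow> real poly \<Rightarrow> (real \<Rightarrow> real) \<Rightarrow> real" where
  "Ierr T q w = integral {0..T} (\<lambda>s. \<bar>poly q s - w s\<bar>)"

lemma cont_poly: "continuous_on S (\<lambda>x. poly (q::real poly) x)"
  by (rule continuous_on_poly[OF continuous_on_id])

lemma ctraj_restrict:
  assumes "ctraj umin umax a b u0 p v" "a \<le> t" "t \<le> b"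
  shows "ctraj umin umax a t u0 p v"
  unfolding ctraj_def
proof (intro conjI ballI)
  show "v a = u0" using assms by (simp add: ctraj_def)
  show "continuous_on {a..t} v" using assms by (auto simp: ctraj_def intro: continuous_on_subset)
  fix s assume s: "s \<in> {a..<t}"
  have "(v has_real_derivative sat_S umin umax (v s) (p s)) (at s within {s..b})"
    using assms s by (auto simp: ctraj_def)
  then show "(v has_real_derivative sat_S umin umax (v s) (p s)) (at s within {s..t})"
    by (rule DERIV_subset) (use assms in auto)
qed

lemma cont_integrable:
  fixes f :: "real \<Rightarrow> real"
  assumes "continuous_on {a..b} f" "a \<le> c" "d \<le> b"
  shows "f integrable_on {c..d}"
  by (rule integrable_continuous_real) (rule continuous_on_subset[OF assms(1)], use assms in auto)

lemma integral_le_upper: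
  fixes p :: "real \<Rightarrow> real"
  assumes "continuous_on {0..T} p" "\<And>t. t \<in> {0..T} \<Longrightarrow> p t \<ge> 0" "s \<in> {0..T}"
  shows "integral {0..s} p \<le> integral {0..T} p"
  using integral_mono_upper[OF assms(1,2)] assms(3) by auto

lemma classical_close:
  fixes w :: "real \<Rightarrow> real"
  assumes cw: "continuous_on {0..T} w"
    and v1: "sat_poly_traj umin umax T u0 (poly q1) v1"
    and v2: "sat_poly_traj umin umax T u0 (poly q2) v2"
    and s: "s \<in> {0..T}"
  shows "\<bar>v1 s - v2 s\<bar> \<le> Ierr T q1 w + Ierr T q2 w"
proof -
  have "\<bar>v1 s - v2 s\<bar> \<le> integral {0..s} (\<lambda>\<sigma>. \<bar>poly q1 \<sigma> - poly q2 \<sigma>\<bar>)"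
    by (rule sat_lip[where umin=umin and umax=umax and T=T])
       (use v1 v2 s in \<open>auto simp: sat_poly_traj_def intro: continuous_intros\<close>)
  also have "\<dots> \<le> integral {0..T} (\<lambda>\<sigma>. \<bar>poly q1 \<sigma> - poly q2 \<sigma>\<bar>)"
    by (rule integral_le_upper[OF _ _ s]) (auto intro!: continuous_intros cont_poly)
  also have "\<dots> \<le> integral {0..T} (\<lambda>\<sigma>. \<bar>poly q1 \<sigma> - w \<sigma>\<bar> + \<bar>poly q2 \<sigma> - w \<sigma>\<bar>)"
    by (rule integral_le) (auto intro!: cont_integrable[of 0 T] continuous_intros cw)
  also have "\<dots> = Ierr T q1 w + Ierr T q2 w"
    unfolding Ierr_def
    by (rule integral_add) (auto intro!: cont_integrable[of 0 T] continuous_intros cw)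
  finally show ?thesis .
qed

definition Phi :: "real \<Rightarrow> real \<Rightarrow> real \<Rightarrow> real \<Rightarrow> (real \<Rightarrow> real) \<Rightarrow> real \<Rightarrow> real" where
  "Phi umin umax T u0 w s = Inf {v s + Ierr T q w | q v. sat_poly_traj umin umax T u0 (poly q) v}"

lemma Phi_close:
  fixes w :: "real \<Rightarrow> real"
  assumes cw: "continuous_on {0..T} w"
    and v: "sat_poly_traj umin umax T u0 (poly q) v"
    and s: "s \<in> {0..T}"
  shows "\<bar>v s - Phi umin umax T u0 w s\<bar> \<le> Ierr T q w"
proof -
  define A where "A = {v s + Ierr T q w | q v. sat_poly_traj umin umax T u0 (poly q) v}"
  have inA: "v s + Ierr T q w \<in> A" using v by (auto simp: A_def)
  have lb: "\<And>a. a \<in> A \<Longrightarrow> v s - Ierr T q w \<le> a"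
  proof -
    fix a assume "a \<in> A"
    then obtain q' v' where a: "a = v' s + Ierr T q' w" and v': "sat_poly_traj umin umax T u0 (poly q') v'"
      by (auto simp: A_def)
    have "\<bar>v s - v' s\<bar> \<le> Ierr T q w + Ierr T q' w" by (rule classical_close[OF cw v v' s])
    then show "v s - Ierr T q w \<le> a" unfolding a by linarith
  qed
  have bdd: "bdd_below A" using lb by (auto simp: bdd_below_def)
  have "Inf A \<le> v s + Ierr T q w" by (rule cInf_lower[OF inA bdd])
  moreover have "v s - Ierr T q w \<le> Inf A" using inA lb by (intro cInf_greatest) auto
  ultimately show ?thesis unfolding Phi_def A_def[symmetric] by linarith
qed

lemma approx_traj:
  fixes w :: "real \<Rightarrow> real"
  assumes um: "umin < umax" and T: "0 \<le> T" and cw: "continuous_on {0..T} w" and d: "\<delta> > 0"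
  shows "\<exists>q v. sat_poly_traj umin umax T u0 (poly q) v \<and> (\<forall>s\<in>{0..T}. \<bar>poly q s - w s\<bar> < \<delta>)
           \<and> Ierr T q w \<le> \<delta> * T"
proof -
  obtain q where q: "\<forall>s\<in>{0..T}. \<bar>poly q s - w s\<bar> < \<delta>" using poly_approx[OF cw d] by blast
  obtain v where v: "sat_poly_traj umin umax T u0 (poly q) v" using sat_poly_exists[OF um T] by blast
  have "Ierr T q w \<le> integral {0..T} (\<lambda>_. \<delta>)"
    unfolding Ierr_def
    by (rule integral_le) (use q in \<open>auto intro!: cont_integrable[of 0 T] continuous_intros cw less_imp_le\<close>)
  also have "\<dots> = \<delta> * T" using T by simp
  finally show ?thesis using q v by blast
qed

lemma Phi_traj:
  fixes w :: "real \<Rightarrow> real"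
  assumes cw: "continuous_on {0..T} w"
  shows "sat_traj_on umin umax T u0 w (Phi umin umax T u0 w)"
  unfolding sat_traj_on_def
proof (intro conjI allI impI)
  show "w absolutely_integrable_on {0..T}" by (rule absolutely_integrable_continuous_real[OF cw])
  fix \<epsilon> :: real assume e: "\<epsilon> > 0"
  show "\<exists>\<eta>>0. \<forall>q v. sat_poly_traj umin umax T u0 (poly q) v \<and>
          integral {0..T} (\<lambda>s. \<bar>poly q s - w s\<bar>) < \<eta> \<longrightarrow>
          (\<forall>s\<in>{0..T}. \<bar>v s - Phi umin umax T u0 w s\<bar> < \<epsilon>)"
  proof (intro exI[of _ \<epsilon>] conjI allI impI ballI e)
    fix q v s assume h: "sat_poly_traj umin umax T u0 (poly q) v \<and> integral {0..T} (\<lambda>s. \<bar>poly q s - w s\<bar>) < \<epsilon>"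
      and s: "s \<in> {0..T}"
    have "\<bar>v s - Phi umin umax T u0 w s\<bar> \<le> Ierr T q w" using Phi_close[OF cw _ s] h by blast
    then show "\<bar>v s - Phi umin umax T u0 w s\<bar> < \<epsilon>" using h by (simp add: Ierr_def)
  qed
qed

lemma traj_approx:
  fixes w :: "real \<Rightarrow> real"
  assumes um: "umin < umax" and T: "0 \<le> T" and cw: "continuous_on {0..T} w"
    and u: "sat_traj_on umin umax T u0 w u" and e: "\<epsilon> > 0" and d: "\<delta> > 0"
  shows "\<exists>q v. sat_poly_traj umin umax T u0 (poly q) v \<and> (\<forall>s\<in>{0..T}. \<bar>poly q s - w s\<bar> < \<delta>)
           \<and> Ierr T q w \<le> \<delta> * T \<and> (\<forall>s\<in>{0..T}. \<bar>v s - u s\<bar> < \<epsilon>)"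
proof -
  obtain \<eta> where \<eta>: "\<eta> > 0" "\<forall>q v. sat_poly_traj umin umax T u0 (poly q) v \<and>
          integral {0..T} (\<lambda>s. \<bar>poly q s - w s\<bar>) < \<eta> \<longrightarrow> (\<forall>s\<in>{0..T}. \<bar>v s - u s\<bar> < \<epsilon>)"
    using u e unfolding sat_traj_on_def by blast
  define \<delta>' where "\<delta>' = min \<delta> (\<eta> / (T + 1))"
  have d': "\<delta>' > 0" using d \<eta> T by (simp add: \<delta>'_def)
  obtain q v where qv: "sat_poly_traj umin umax T u0 (poly q) v" "\<forall>s\<in>{0..T}. \<bar>poly q s - w s\<bar> < \<delta>'"
    "Ierr T q w \<le> \<delta>' * T"
    using approx_traj[OF um T cw d'] by blast
  have "\<delta>' * T < \<eta>"
  proof -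
    have "\<delta>' * T \<le> (\<eta> / (T + 1)) * T" using T by (intro mult_right_mono) (auto simp: \<delta>'_def)
    also have "\<dots> < \<eta>" using \<eta> T by (simp add: field_simps)
    finally show ?thesis .
  qed
  then have "Ierr T q w < \<eta>" using qv by linarith
  then have "\<forall>s\<in>{0..T}. \<bar>v s - u s\<bar> < \<epsilon>" using \<eta>(2) qv(1) by (auto simp: Ierr_def)
  moreover have "\<delta>' * T \<le> \<delta> * T" using T by (intro mult_right_mono) (auto simp: \<delta>'_def)
  moreover have "\<forall>s\<in>{0..T}. \<bar>poly q s - w s\<bar> < \<delta>" using qv(2) by (auto simp: \<delta>'_def)
  ultimately show ?thesis using qv by (intro exI[of _ q] exI[of _ v]) auto
qed

lemma abs3: fixes a b c :: real shows "\<bar>a - c\<bar> \<le> \<bar>b - c\<bar> + \<bar>b - a\<bar>"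
  by (cases "a \<le> c"; cases "b \<le> c"; cases "b \<le> a") (auto simp: abs_if)

lemma traj_eq_Phi:
  fixes w :: "real \<Rightarrow> real"
  assumes um: "umin < umax" and T: "0 \<le> T" and cw: "continuous_on {0..T} w"
    and u: "sat_traj_on umin umax T u0 w u" and s: "s \<in> {0..T}"
  shows "u s = Phi umin umax T u0 w s"
proof -
  have "\<bar>u s - Phi umin umax T u0 w s\<bar> \<le> e" if e: "e > 0" for e
  proof -
    obtain q v where qv: "sat_poly_traj umin umax T u0 (poly q) v" "Ierr T q w \<le> (e/2/(T+1)) * T"
      "\<forall>s\<in>{0..T}. \<bar>v s - u s\<bar> < e/2"
      using traj_approx[OF um T cw u, of "e/2" "e/2/(T+1)"] e T by auto
    have "(e/2/(T+1)) * T \<le> e/2" using e T by (simp add: field_simps)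
    then have I2: "Ierr T q w \<le> e/2" using qv(2) by (rule order_trans[rotated])
    have "\<bar>v s - Phi umin umax T u0 w s\<bar> \<le> Ierr T q w" by (rule Phi_close[OF cw qv(1) s])
    moreover have "\<bar>v s - u s\<bar> < e/2" using qv(3) s by auto
    moreover have "e/2 + e/2 = e" by simp
    moreover have "\<bar>u s - Phi umin umax T u0 w s\<bar> \<le> \<bar>v s - Phi umin umax T u0 w s\<bar> + \<bar>v s - u s\<bar>"
      using abs_triangle_ineq4[of "v s - Phi umin umax T u0 w s" "v s - u s"] by simp
    ultimately show ?thesis using I2 by linarith
  qed
  then have "\<bar>u s - Phi umin umax T u0 w s\<bar> \<le> 0" by (rule field_le_epsilon) simp
  then show ?thesis by simp
qed

lemma traj_unique:
  fixes w :: "real \<Rightarrow> real"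
  assumes um: "umin < umax" and T: "0 \<le> T" and cw: "continuous_on {0..T} w"
    and u1: "sat_traj_on umin umax T u0 w u1" and u2: "sat_traj_on umin umax T u0 w u2" and s: "s \<in> {0..T}"
  shows "u1 s = u2 s"
  using traj_eq_Phi[OF um T cw u1 s] traj_eq_Phi[OF um T cw u2 s] by simp


lemma Ierr_le:
  fixes w :: "real \<Rightarrow> real"
  assumes t: "0 \<le> t" and cw: "continuous_on {0..t} w" and q: "\<forall>s\<in>{0..t}. \<bar>poly q s - w s\<bar> < \<delta>"
  shows "Ierr t q w \<le> \<delta> * t"
proof -
  have "Ierr t q w \<le> integral {0..t} (\<lambda>_. \<delta>)"
    unfolding Ierr_def
    by (rule integral_le) (use q in \<open>auto intro!: cont_integrable[of 0 t] continuous_intros cw cont_poly less_imp_le\<close>)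
  also have "\<dots> = \<delta> * t" using t by simp
  finally show ?thesis .
qed

lemma traj_cong_u:
  assumes "sat_traj_on umin umax T u0 w u" "\<forall>s\<in>{0..T}. u' s = u s"
  shows "sat_traj_on umin umax T u0 w u'"
proof -
  have "(\<forall>s\<in>{0..T}. \<bar>v s - u' s\<bar> < \<epsilon>) \<longleftrightarrow> (\<forall>s\<in>{0..T}. \<bar>v s - u s\<bar> < \<epsilon>)" for v \<epsilon>
    using assms(2) by auto
  then show ?thesis using assms(1) unfolding sat_traj_on_def by simp
qed

lemma traj_cong_w:
  fixes w w' :: "real \<Rightarrow> real"
  assumes u: "sat_traj_on umin umax T u0 w u" and cw': "continuous_on {0..T} w'"
    and eq: "\<forall>s\<in>{0..T}. w' s = w s"
  shows "sat_traj_on umin umax T u0 w' u"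
proof -
  have "\<And>q. integral {0..T} (\<lambda>s. \<bar>poly q s - w' s\<bar>) = integral {0..T} (\<lambda>s. \<bar>poly q s - w s\<bar>)"
    by (rule integral_cong) (use eq in auto)
  then show ?thesis using u absolutely_integrable_continuous_real[OF cw'] unfolding sat_traj_on_def
    by simp
qed

lemma traj_restrict:
  fixes w :: "real \<Rightarrow> real"
  assumes um: "umin < umax" and t: "0 \<le> t" "t \<le> T" and cw: "continuous_on {0..T} w"
    and u: "sat_traj_on umin umax T u0 w u"
  shows "sat_traj_on umin umax t u0 w u"
proof -
  have T: "0 \<le> T" using t by simp
  have cwt: "continuous_on {0..t} w" using cw t by (auto intro: continuous_on_subset)
  have "u s = Phi umin umax t u0 w s" if s: "s \<in> {0..t}" for s
  proof -
    have "\<bar>u s - Phi umin umax t u0 w s\<bar> \<le> e" if e: "e > 0" for e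
    proof -
      define \<epsilon> where "\<epsilon> = e / 2"
      have ee: "e = 2 * \<epsilon>" and ep: "\<epsilon> > 0" using e by (auto simp: \<epsilon>_def)
      define \<delta> where "\<delta> = \<epsilon> / (T + 1)"
      have dp: "\<delta> > 0" using ep T by (simp add: \<delta>_def)
      obtain q v where qv: "sat_poly_traj umin umax T u0 (poly q) v" "\<forall>s\<in>{0..T}. \<bar>poly q s - w s\<bar> < \<delta>"
        "\<forall>s\<in>{0..T}. \<bar>v s - u s\<bar> < \<epsilon>"
        using traj_approx[OF um T cw u ep dp] by blast
      have vt: "sat_poly_traj umin umax t u0 (poly q) v"
        using qv(1) ctraj_restrict[of umin umax 0 T u0 "poly q" v t] t
        unfolding sat_poly_traj_ctraj by simp
      have "Ierr t q w \<le> \<delta> * t" by (rule Ierr_le[OF t(1) cwt]) (use qv(2) t in auto)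
      also have "\<delta> * t \<le> \<epsilon>"
      proof -
        have "\<delta> * t \<le> \<delta> * (T + 1)" using dp t by (intro mult_left_mono) auto
        also have "\<dots> = \<epsilon>" using T by (simp add: \<delta>_def)
        finally show ?thesis .
      qed
      finally have I: "Ierr t q w \<le> \<epsilon>" .
      have "\<bar>v s - Phi umin umax t u0 w s\<bar> \<le> Ierr t q w" by (rule Phi_close[OF cwt vt s])
      moreover have "\<bar>v s - u s\<bar> < \<epsilon>" using qv(3) s t by auto
      moreover have "\<bar>u s - Phi umin umax t u0 w s\<bar> \<le> \<bar>v s - Phi umin umax t u0 w s\<bar> + \<bar>v s - u s\<bar>"
        by (rule abs3)
      ultimately show ?thesis using I ee by linarith
    qed
    then have "\<bar>u s - Phi umin umax t u0 w s\<bar> \<le> 0" by (rule field_le_epsilon) simp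
    then show ?thesis by simp
  qed
  then show ?thesis by (intro traj_cong_u[OF Phi_traj[OF cwt]]) auto
qed

lemma traj_cont:
  fixes w :: "real \<Rightarrow> real"
  assumes um: "umin < umax" and T: "0 \<le> T" and cw: "continuous_on {0..T} w"
    and u: "sat_traj_on umin umax T u0 w u"
  shows "continuous_on {0..T} u"
  unfolding continuous_on_iff
proof (intro ballI allI impI)
  fix x e :: real assume x: "x \<in> {0..T}" and e: "e > 0"
  define \<epsilon> where "\<epsilon> = e / 3"
  have ee: "e = 3 * \<epsilon>" and ep: "\<epsilon> > 0" using e by (auto simp: \<epsilon>_def)
  obtain q v where qv: "sat_poly_traj umin umax T u0 (poly q) v" "\<forall>s\<in>{0..T}. \<bar>v s - u s\<bar> < \<epsilon>"
    using traj_approx[OF um T cw u ep, of 1] by auto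
  have cv: "continuous_on {0..T} v" using qv(1) by (simp add: sat_poly_traj_def)
  obtain d where d: "d > 0" "\<forall>x'\<in>{0..T}. dist x' x < d \<longrightarrow> dist (v x') (v x) < \<epsilon>"
    using cv x ep unfolding continuous_on_iff by blast
  show "\<exists>d>0. \<forall>x'\<in>{0..T}. dist x' x < d \<longrightarrow> dist (u x') (u x) < e"
  proof (intro exI[of _ d] conjI ballI impI d(1))
    fix x' assume x': "x' \<in> {0..T}" "dist x' x < d"
    have "\<bar>v x' - v x\<bar> < \<epsilon>" using d(2) x' by (auto simp: dist_real_def)
    moreover have "\<bar>v x' - u x'\<bar> < \<epsilon>" "\<bar>v x - u x\<bar> < \<epsilon>" using qv(2) x x' by auto
    ultimately show "dist (u x') (u x) < e" unfolding dist_real_def using ee by linarith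
  qed
qed

lemma traj_lip:
  fixes w1 w2 :: "real \<Rightarrow> real"
  assumes um: "umin < umax" and T: "0 \<le> T" and cw1: "continuous_on {0..T} w1" and cw2: "continuous_on {0..T} w2"
    and u1: "sat_traj_on umin umax T u0 w1 u1" and u2: "sat_traj_on umin umax T u0 w2 u2"
    and s: "s \<in> {0..T}"
  shows "\<bar>u1 s - u2 s\<bar> \<le> integral {0..s} (\<lambda>\<sigma>. \<bar>w1 \<sigma> - w2 \<sigma>\<bar>)"
proof -
  define J where "J = integral {0..s} (\<lambda>\<sigma>. \<bar>w1 \<sigma> - w2 \<sigma>\<bar>)"
  have "\<bar>u1 s - u2 s\<bar> \<le> J + e" if e: "e > 0" for e
  proof -
    define \<epsilon> where "\<epsilon> = e / 4"
    have ee: "e = 4 * \<epsilon>" and ep: "\<epsilon> > 0" using e by (auto simp: \<epsilon>_def)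
    define \<delta> where "\<delta> = \<epsilon> / (T + 1)"
    have dp: "\<delta> > 0" using ep T by (simp add: \<delta>_def)
    obtain q1 v1 where qv1: "sat_poly_traj umin umax T u0 (poly q1) v1" "\<forall>s\<in>{0..T}. \<bar>poly q1 s - w1 s\<bar> < \<delta>"
        "\<forall>s\<in>{0..T}. \<bar>v1 s - u1 s\<bar> < \<epsilon>"
      using traj_approx[OF um T cw1 u1 ep dp] by blast
    obtain q2 v2 where qv2: "sat_poly_traj umin umax T u0 (poly q2) v2" "\<forall>s\<in>{0..T}. \<bar>poly q2 s - w2 s\<bar> < \<delta>"
        "\<forall>s\<in>{0..T}. \<bar>v2 s - u2 s\<bar> < \<epsilon>"
      using traj_approx[OF um T cw2 u2 ep dp] by blast
    have cws: "continuous_on {0..s} (\<lambda>\<sigma>. \<bar>w1 \<sigma> - w2 \<sigma>\<bar>)"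
      by (intro continuous_intros continuous_on_subset[OF cw1] continuous_on_subset[OF cw2]) (use s in auto)
    have "\<bar>v1 s - v2 s\<bar> \<le> integral {0..s} (\<lambda>\<sigma>. \<bar>poly q1 \<sigma> - poly q2 \<sigma>\<bar>)"
      by (rule sat_lip[where umin=umin and umax=umax and T=T])
         (use qv1 qv2 s in \<open>auto simp: sat_poly_traj_def intro: continuous_intros cont_poly\<close>)
    also have "\<dots> \<le> integral {0..s} (\<lambda>\<sigma>. \<bar>w1 \<sigma> - w2 \<sigma>\<bar> + 2 * \<delta>)"
    proof (rule integral_le)
      show "(\<lambda>\<sigma>. \<bar>poly q1 \<sigma> - poly q2 \<sigma>\<bar>) integrable_on {0..s}"
        by (rule integrable_continuous_real) (intro continuous_intros cont_poly)
      show "(\<lambda>\<sigma>. \<bar>w1 \<sigma> - w2 \<sigma>\<bar> + 2 * \<delta>) integrable_on {0..s}"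
        by (rule integrable_continuous_real) (intro continuous_intros cws)
      fix \<sigma> assume "\<sigma> \<in> {0..s}"
      then have "\<sigma> \<in> {0..T}" using s by auto
      then have "\<bar>poly q1 \<sigma> - w1 \<sigma>\<bar> < \<delta>" "\<bar>poly q2 \<sigma> - w2 \<sigma>\<bar> < \<delta>" using qv1(2) qv2(2) by auto
      then show "\<bar>poly q1 \<sigma> - poly q2 \<sigma>\<bar> \<le> \<bar>w1 \<sigma> - w2 \<sigma>\<bar> + 2 * \<delta>" by linarith
    qed
    also have "\<dots> = J + 2 * \<delta> * s"
    proof -
      have "integral {0..s} (\<lambda>\<sigma>. \<bar>w1 \<sigma> - w2 \<sigma>\<bar> + 2 * \<delta>) = J + integral {0..s} (\<lambda>\<sigma>. 2 * \<delta>)"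
        unfolding J_def by (rule integral_add) (auto intro: integrable_continuous_real cws)
      then show ?thesis using s by simp
    qed
    also have "\<dots> \<le> J + 2 * \<epsilon>"
    proof -
      have "\<delta> * s \<le> \<delta> * (T + 1)" using dp s by (intro mult_left_mono) auto
      also have "\<dots> = \<epsilon>" using T by (simp add: \<delta>_def)
      finally show ?thesis by simp
    qed
    finally have "\<bar>v1 s - v2 s\<bar> \<le> J + 2 * \<epsilon>" .
    moreover have "\<bar>v1 s - u1 s\<bar> < \<epsilon>" "\<bar>v2 s - u2 s\<bar> < \<epsilon>" using qv1(3) qv2(3) s by auto
    ultimately show ?thesis using ee by linarith
  qed
  then have "\<bar>u1 s - u2 s\<bar> \<le> J" by (rule field_le_epsilon)
  then show ?thesis by (simp add: J_def)
qed

lemma const_traj: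
  assumes um: "umin < umax" and T: "0 \<le> T"
  shows "sat_traj_on umin umax T u0 (\<lambda>_. 0) (\<lambda>_. u0)"
  unfolding sat_traj_on_def
proof (intro conjI allI impI)
  show "(\<lambda>_. 0::real) absolutely_integrable_on {0..T}" by simp
  fix \<epsilon> :: real assume e: "\<epsilon> > 0"
  show "\<exists>\<eta>>0. \<forall>q v. sat_poly_traj umin umax T u0 (poly q) v \<and>
          integral {0..T} (\<lambda>s. \<bar>poly q s - 0\<bar>) < \<eta> \<longrightarrow> (\<forall>s\<in>{0..T}. \<bar>v s - u0\<bar> < \<epsilon>)"
  proof (intro exI[of _ \<epsilon>] conjI allI impI ballI e)
    fix q v s assume h: "sat_poly_traj umin umax T u0 (poly q) v \<and> integral {0..T} (\<lambda>s. \<bar>poly q s - 0\<bar>) < \<epsilon>"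
      and s: "s \<in> {0..T}"
    have "\<bar>v s - (\<lambda>_. u0) s\<bar> \<le> integral {0..s} (\<lambda>\<sigma>. \<bar>poly q \<sigma> - 0\<bar>)"
    proof (rule sat_lip[of T v "\<lambda>_. u0" "poly q" "\<lambda>_. 0" umin umax s])
      fix s' assume "s' \<in> {0..<T}"
      have "sat_S umin umax u0 0 = 0" by (simp add: sat_S_def)
      then show "((\<lambda>_. u0) has_real_derivative sat_S umin umax ((\<lambda>_. u0) s') 0) (at s' within {s'..T})"
        by simp
    qed (use h s in \<open>auto simp: sat_poly_traj_def intro: continuous_intros cont_poly\<close>)
    also have "\<dots> \<le> integral {0..T} (\<lambda>\<sigma>. \<bar>poly q \<sigma> - 0\<bar>)"
      by (rule integral_le_upper[OF _ _ s]) (auto intro!: continuous_intros cont_poly)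
    finally show "\<bar>v s - u0\<bar> < \<epsilon>" using h by simp
  qed
qed

lemma traj_bound:
  fixes w :: "real \<Rightarrow> real"
  assumes um: "umin < umax" and T: "0 \<le> T" and cw: "continuous_on {0..T} w"
    and u: "sat_traj_on umin umax T u0 w u" and s: "s \<in> {0..T}"
  shows "\<bar>u s - u0\<bar> \<le> integral {0..s} (\<lambda>\<sigma>. \<bar>w \<sigma>\<bar>)"
  using traj_lip[OF um T cw _ u const_traj[OF um T] s] by simp

lemma traj_init:
  fixes w :: "real \<Rightarrow> real"
  assumes um: "umin < umax" and T: "0 \<le> T" and cw: "continuous_on {0..T} w"
    and u: "sat_traj_on umin umax T u0 w u"
  shows "u 0 = u0"
  using traj_bound[OF um T cw u, of 0] T by simp




lemma eval_cont: "continuous_on UNIV (\<lambda>y::(real \<Rightarrow>\<^sub>C 'b::metric_space). apply_bcontfun y t)"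
  by (rule lipschitz_on_continuous_on[of 1]) (auto intro!: lipschitz_onI simp: dist_bounded)

locale clsys =
  fixes f :: "(real^'n) \<times> real \<Rightarrow> real^'n" and g :: "real^'n \<Rightarrow> real"
    and umin umax k tp r u0 :: real and x0 :: "real^'n"
  assumes um: "umin < umax"
    and f_lip: "\<And>R. \<exists>L. \<forall>a b. norm a \<le> R \<longrightarrow> norm b \<le> R \<longrightarrow> norm (f a - f b) \<le> L * norm (a - b)"
    and g_lip: "\<And>R. \<exists>L. \<forall>a b. norm a \<le> R \<longrightarrow> norm b \<le> R \<longrightarrow> \<bar>g a - g b\<bar> \<le> L * norm (a - b)"
    and f_cont: "continuous_on UNIV f" and g_cont: "continuous_on UNIV g"
begin

definition W :: "(real \<Rightarrow> real^'n) \<Rightarrow> real \<Rightarrow> real" where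
  "W y s = k * (r - g (y s))"

definition U :: "real \<Rightarrow> (real \<Rightarrow> real^'n) \<Rightarrow> real \<Rightarrow> real" where
  "U b y = Phi umin umax b u0 (W y)"

definition F :: "real \<Rightarrow> (real \<Rightarrow> real^'n) \<Rightarrow> real \<Rightarrow> real^'n" where
  "F b y s = f (y s, U b y s + tp * k * (r - g (y s)))"

definition isol :: "real \<Rightarrow> (real \<Rightarrow> real^'n) \<Rightarrow> bool" where
  "isol b y \<longleftrightarrow> continuous_on {0..b} y \<and> (\<forall>t\<in>{0..b}. y t = x0 + integral {0..t} (F b y))"

lemma g_comp_cont: "continuous_on S y \<Longrightarrow> continuous_on S (\<lambda>s. g (y s))"
  by (rule continuous_on_compose2[OF g_cont]) auto

lemma W_cont: "continuous_on S y \<Longrightarrow> continuous_on S (W y)"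
  unfolding W_def by (intro continuous_intros g_comp_cont)

lemma U_traj: "0 \<le> b \<Longrightarrow> continuous_on {0..b} y \<Longrightarrow> sat_traj_on umin umax b u0 (W y) (U b y)"
  unfolding U_def by (rule Phi_traj) (rule W_cont)

lemma U_cont: "0 \<le> b \<Longrightarrow> continuous_on {0..b} y \<Longrightarrow> continuous_on {0..b} (U b y)"
  by (rule traj_cont[OF um _ W_cont U_traj])

lemma F_cont:
  assumes "0 \<le> b" "continuous_on {0..b} y"
  shows "continuous_on {0..b} (F b y)"
proof -
  have "continuous_on {0..b} (\<lambda>s. (y s, U b y s + tp * k * (r - g (y s))))"
    by (intro continuous_intros assms U_cont g_comp_cont)
  then show ?thesis unfolding F_def by (rule continuous_on_compose2[OF f_cont]) auto
qed

lemma U_restrict: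
  assumes ab: "0 \<le> a" "a \<le> b" and c1: "continuous_on {0..a} y1" and c2: "continuous_on {0..b} y2"
    and eq: "\<forall>s\<in>{0..a}. y2 s = y1 s" and s: "s \<in> {0..a}"
  shows "U b y2 s = U a y1 s"
proof -
  have "sat_traj_on umin umax a u0 (W y2) (U b y2)"
    by (rule traj_restrict[OF um ab _ U_traj[OF _ c2]]) (use ab c2 in \<open>auto intro: W_cont\<close>)
  then have "sat_traj_on umin umax a u0 (W y1) (U b y2)"
    by (rule traj_cong_w[OF _ W_cont[OF c1]]) (use eq in \<open>auto simp: W_def\<close>)
  then show ?thesis by (rule traj_unique[OF um ab(1) W_cont[OF c1] _ U_traj[OF ab(1) c1] s])
qed

lemma F_restrict:
  assumes ab: "0 \<le> a" "a \<le> b" and c1: "continuous_on {0..a} y1" and c2: "continuous_on {0..b} y2"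
    and eq: "\<forall>s\<in>{0..a}. y2 s = y1 s" and s: "s \<in> {0..a}"
  shows "F b y2 s = F a y1 s"
  unfolding F_def using U_restrict[OF assms] eq s by simp

lemma U_lip:
  assumes b: "0 \<le> b" and c1: "continuous_on {0..b} y1" and c2: "continuous_on {0..b} y2" and s: "s \<in> {0..b}"
  shows "\<bar>U b y1 s - U b y2 s\<bar> \<le> integral {0..s} (\<lambda>\<sigma>. \<bar>W y1 \<sigma> - W y2 \<sigma>\<bar>)"
  by (rule traj_lip[OF um b W_cont[OF c1] W_cont[OF c2] U_traj[OF b c1] U_traj[OF b c2] s])

lemma U_bnd:
  assumes b: "0 \<le> b" and c: "continuous_on {0..b} y" and s: "s \<in> {0..b}"
  shows "\<bar>U b y s - u0\<bar> \<le> integral {0..s} (\<lambda>\<sigma>. \<bar>W y \<sigma>\<bar>)"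
  by (rule traj_bound[OF um b W_cont[OF c] U_traj[OF b c] s])

lemma g_bound: "\<exists>G L. 0 \<le> L \<and> (\<forall>z. norm z \<le> R \<longrightarrow> \<bar>g z\<bar> \<le> G) \<and>
    (\<forall>a b. norm a \<le> R \<longrightarrow> norm b \<le> R \<longrightarrow> \<bar>g a - g b\<bar> \<le> L * norm (a - b))"
proof -
  obtain L where L: "\<forall>a b. norm a \<le> R \<longrightarrow> norm b \<le> R \<longrightarrow> \<bar>g a - g b\<bar> \<le> L * norm (a - b)"
    using g_lip by blast
  define L' where "L' = max L 0"
  have L': "\<forall>a b. norm a \<le> R \<longrightarrow> norm b \<le> R \<longrightarrow> \<bar>g a - g b\<bar> \<le> L' * norm (a - b)"
  proof (intro allI impI)
    fix a b :: "real^'n" assume "norm a \<le> R" "norm b \<le> R"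
    then have "\<bar>g a - g b\<bar> \<le> L * norm (a - b)" using L by blast
    also have "\<dots> \<le> L' * norm (a - b)" by (intro mult_right_mono) (auto simp: L'_def)
    finally show "\<bar>g a - g b\<bar> \<le> L' * norm (a - b)" .
  qed
  show ?thesis
  proof (cases "R \<ge> 0")
    case True
    have "\<bar>g z\<bar> \<le> \<bar>g 0\<bar> + L' * R" if "norm z \<le> R" for z
    proof -
      have "\<bar>g z - g 0\<bar> \<le> L' * norm (z - 0)" using L'[rule_format, of z 0] that True by simp
      also have "\<dots> \<le> L' * R" using that by (intro mult_left_mono) (auto simp: L'_def)
      finally show ?thesis by linarith
    qed
    then show ?thesis using L' by (intro exI[of _ "\<bar>g 0\<bar> + L' * R"] exI[of _ L']) (auto simp: L'_def)
  next
    case False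
    then show ?thesis using L' by (intro exI[of _ 0] exI[of _ L']) (auto simp: L'_def intro: order_trans[OF norm_ge_zero])
  qed
qed

lemma f_bound: "\<exists>M L. 0 \<le> L \<and> 0 \<le> M \<and> (\<forall>z. norm z \<le> R \<longrightarrow> norm (f z) \<le> M) \<and>
    (\<forall>a b. norm a \<le> R \<longrightarrow> norm b \<le> R \<longrightarrow> norm (f a - f b) \<le> L * norm (a - b))"
proof -
  obtain L where L: "\<forall>a b. norm a \<le> R \<longrightarrow> norm b \<le> R \<longrightarrow> norm (f a - f b) \<le> L * norm (a - b)"
    using f_lip by blast
  define L' where "L' = max L 0"
  have L': "\<forall>a b. norm a \<le> R \<longrightarrow> norm b \<le> R \<longrightarrow> norm (f a - f b) \<le> L' * norm (a - b)"
  proof (intro allI impI)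
    fix a b :: "(real^'n) \<times> real" assume "norm a \<le> R" "norm b \<le> R"
    then have "norm (f a - f b) \<le> L * norm (a - b)" using L by blast
    also have "\<dots> \<le> L' * norm (a - b)" by (intro mult_right_mono) (auto simp: L'_def)
    finally show "norm (f a - f b) \<le> L' * norm (a - b)" .
  qed
  show ?thesis
  proof (cases "R \<ge> 0")
    case True
    have "norm (f z) \<le> norm (f 0) + L' * R" if "norm z \<le> R" for z
    proof -
      have "norm (f z - f 0) \<le> L' * norm (z - 0)" using L'[rule_format, of z 0] that True by simp
      also have "\<dots> \<le> L' * R" using that by (intro mult_left_mono) (auto simp: L'_def)
      finally show ?thesis by (metis add.commute diff_le_eq norm_triangle_ineq2 order_trans)
    qed
    moreover have "0 \<le> norm (f 0) + L' * R" using True by (auto simp: L'_def)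
    ultimately show ?thesis using L' by (intro exI[of _ "norm (f 0) + L' * R"] exI[of _ L']) (auto simp: L'_def)
  next
    case False
    then show ?thesis using L' by (intro exI[of _ 0] exI[of _ L']) (auto simp: L'_def intro: order_trans[OF norm_ge_zero])
  qed
qed


lemma integral_le_const:
  fixes h :: "real \<Rightarrow> real"
  assumes "continuous_on {0..s} h" "0 \<le> s" "\<And>\<sigma>. \<sigma> \<in> {0..s} \<Longrightarrow> h \<sigma> \<le> c"
  shows "integral {0..s} h \<le> s * c"
proof -
  have "integral {0..s} h \<le> integral {0..s} (\<lambda>_. c)"
    by (rule integral_le) (use assms in \<open>auto intro: integrable_continuous_real\<close>)
  then show ?thesis using assms(2) by simp
qed

lemma U_abs_bound:
  assumes b: "0 \<le> b" and c: "continuous_on {0..b} y" and G: "\<forall>\<sigma>\<in>{0..b}. \<bar>g (y \<sigma>)\<bar> \<le> G"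
    and s: "s \<in> {0..b}"
  shows "\<bar>U b y s\<bar> \<le> \<bar>u0\<bar> + s * (\<bar>k\<bar> * (\<bar>r\<bar> + G))"
proof -
  have cs: "continuous_on {0..s} y" using c s by (auto intro: continuous_on_subset)
  have "\<bar>U b y s - u0\<bar> \<le> integral {0..s} (\<lambda>\<sigma>. \<bar>W y \<sigma>\<bar>)" by (rule U_bnd[OF b c s])
  also have "\<dots> \<le> s * (\<bar>k\<bar> * (\<bar>r\<bar> + G))"
  proof (rule integral_le_const)
    show "continuous_on {0..s} (\<lambda>\<sigma>. \<bar>W y \<sigma>\<bar>)" by (intro continuous_intros W_cont cs)
    show "0 \<le> s" using s by simp
    fix \<sigma> assume \<sigma>: "\<sigma> \<in> {0..s}"
    have "\<bar>g (y \<sigma>)\<bar> \<le> G" using G \<sigma> s by auto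
    then have "\<bar>r - g (y \<sigma>)\<bar> \<le> \<bar>r\<bar> + G" by linarith
    then show "\<bar>W y \<sigma>\<bar> \<le> \<bar>k\<bar> * (\<bar>r\<bar> + G)" unfolding W_def abs_mult by (intro mult_left_mono) auto
  qed
  finally show ?thesis by linarith
qed

lemma U_diff_bound:
  assumes b: "0 \<le> b" and c1: "continuous_on {0..b} y1" and c2: "continuous_on {0..b} y2"
    and s: "s \<in> {0..b}" and E: "\<forall>\<sigma>\<in>{0..s}. \<bar>g (y1 \<sigma>) - g (y2 \<sigma>)\<bar> \<le> E"
  shows "\<bar>U b y1 s - U b y2 s\<bar> \<le> s * (\<bar>k\<bar> * E)"
proof -
  have cs1: "continuous_on {0..s} y1" using c1 s by (auto intro: continuous_on_subset)
  have cs2: "continuous_on {0..s} y2" using c2 s by (auto intro: continuous_on_subset)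
  have "\<bar>U b y1 s - U b y2 s\<bar> \<le> integral {0..s} (\<lambda>\<sigma>. \<bar>W y1 \<sigma> - W y2 \<sigma>\<bar>)" by (rule U_lip[OF b c1 c2 s])
  also have "\<dots> \<le> s * (\<bar>k\<bar> * E)"
  proof (rule integral_le_const)
    show "continuous_on {0..s} (\<lambda>\<sigma>. \<bar>W y1 \<sigma> - W y2 \<sigma>\<bar>)" by (intro continuous_intros W_cont cs1 cs2)
    show "0 \<le> s" using s by simp
    fix \<sigma> assume \<sigma>: "\<sigma> \<in> {0..s}"
    have "W y1 \<sigma> - W y2 \<sigma> = k * (g (y2 \<sigma>) - g (y1 \<sigma>))" by (simp add: W_def algebra_simps)
    moreover have "\<bar>g (y2 \<sigma>) - g (y1 \<sigma>)\<bar> \<le> E" using E \<sigma> by (simp add: abs_minus_commute)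
    ultimately show "\<bar>W y1 \<sigma> - W y2 \<sigma>\<bar> \<le> \<bar>k\<bar> * E" by (simp add: abs_mult mult_left_mono)
  qed
  finally show ?thesis .
qed

lemma F_consts:
  assumes R: "0 \<le> R" and b0: "0 \<le> b0"
  shows "\<exists>C M. 0 \<le> C \<and> 0 \<le> M \<and>
   (\<forall>b y s. 0 \<le> b \<and> b \<le> b0 \<and> continuous_on {0..b} y \<and> (\<forall>\<sigma>\<in>{0..b}. norm (y \<sigma>) \<le> R) \<and> s \<in> {0..b}
       \<longrightarrow> norm (F b y s) \<le> M) \<and>
   (\<forall>b y1 y2 s D. 0 \<le> b \<and> b \<le> b0 \<and> continuous_on {0..b} y1 \<and> continuous_on {0..b} y2 \<and>
       (\<forall>\<sigma>\<in>{0..b}. norm (y1 \<sigma>) \<le> R) \<and> (\<forall>\<sigma>\<in>{0..b}. norm (y2 \<sigma>) \<le> R) \<and> s \<in> {0..b} \<and>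
       (\<forall>\<sigma>\<in>{0..s}. norm (y1 \<sigma> - y2 \<sigma>) \<le> D) \<longrightarrow> norm (F b y1 s - F b y2 s) \<le> C * D)"
proof -
  obtain G Lg where Lg: "0 \<le> Lg" and G: "\<forall>z. norm z \<le> R \<longrightarrow> \<bar>g z\<bar> \<le> G"
    and gL: "\<forall>a b. norm a \<le> R \<longrightarrow> norm b \<le> R \<longrightarrow> \<bar>g a - g b\<bar> \<le> Lg * norm (a - b)"
    using g_bound[of R] by blast
  have G0: "0 \<le> G" using G[rule_format, of 0] R by auto
  define Ub where "Ub = \<bar>u0\<bar> + b0 * (\<bar>k\<bar> * (\<bar>r\<bar> + G))"
  define V where "V = Ub + \<bar>tp * k\<bar> * (\<bar>r\<bar> + G)"
  obtain M Lf where Lf: "0 \<le> Lf" and M: "0 \<le> M" and fM: "\<forall>z. norm z \<le> R + V \<longrightarrow> norm (f z) \<le> M"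
    and fL: "\<forall>a b. norm a \<le> R + V \<longrightarrow> norm b \<le> R + V \<longrightarrow> norm (f a - f b) \<le> Lf * norm (a - b)"
    using f_bound[of "R + V"] by blast
  define C where "C = Lf * (1 + b0 * (\<bar>k\<bar> * Lg) + \<bar>tp * k\<bar> * Lg)"
  have C: "0 \<le> C" using Lf Lg b0 by (simp add: C_def)
  have arg: "norm (y s, U b y s + tp * k * (r - g (y s))) \<le> R + V"
    if b: "0 \<le> b" "b \<le> b0" and c: "continuous_on {0..b} y" and yR: "\<forall>\<sigma>\<in>{0..b}. norm (y \<sigma>) \<le> R"
      and s: "s \<in> {0..b}" for b y s
  proof -
    have gy: "\<forall>\<sigma>\<in>{0..b}. \<bar>g (y \<sigma>)\<bar> \<le> G" using yR G by auto
    have "\<bar>U b y s\<bar> \<le> \<bar>u0\<bar> + s * (\<bar>k\<bar> * (\<bar>r\<bar> + G))" by (rule U_abs_bound[OF b(1) c gy s])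
    also have "\<dots> \<le> Ub" unfolding Ub_def using s b G0 by (auto intro!: mult_right_mono)
    finally have "\<bar>U b y s\<bar> \<le> Ub" .
    moreover have "\<bar>tp * k * (r - g (y s))\<bar> \<le> \<bar>tp * k\<bar> * (\<bar>r\<bar> + G)"
    proof -
      have "\<bar>r - g (y s)\<bar> \<le> \<bar>r\<bar> + G" using gy s by fastforce
      then show ?thesis by (simp add: abs_mult mult_left_mono)
    qed
    ultimately have "\<bar>U b y s + tp * k * (r - g (y s))\<bar> \<le> V" unfolding V_def by linarith
    moreover have "norm (y s) \<le> R" using yR s by auto
    ultimately show ?thesis using norm_Pair_le[of "y s" "U b y s + tp * k * (r - g (y s))"] by simp
  qed
  have P1: "norm (F b y s) \<le> M" if h: "0 \<le> b \<and> b \<le> b0 \<and> continuous_on {0..b} y \<and> (\<forall>\<sigma>\<in>{0..b}. norm (y \<sigma>) \<le> R) \<and> s \<in> {0..b}"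
     for b s :: real and y :: "real \<Rightarrow> real^'n"
    unfolding F_def using fM arg h by blast
  have P2: "norm (F b y1 s - F b y2 s) \<le> C * D"
    if h: "0 \<le> b \<and> b \<le> b0 \<and> continuous_on {0..b} y1 \<and> continuous_on {0..b} y2 \<and>
       (\<forall>\<sigma>\<in>{0..b}. norm (y1 \<sigma>) \<le> R) \<and> (\<forall>\<sigma>\<in>{0..b}. norm (y2 \<sigma>) \<le> R) \<and> s \<in> {0..b} \<and>
       (\<forall>\<sigma>\<in>{0..s}. norm (y1 \<sigma> - y2 \<sigma>) \<le> D)"
     for b s D :: real and y1 y2 :: "real \<Rightarrow> real^'n"
  proof -
    from h have b: "0 \<le> b" "b \<le> b0" and c1: "continuous_on {0..b} y1" and c2: "continuous_on {0..b} y2"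
      and R1: "\<forall>\<sigma>\<in>{0..b}. norm (y1 \<sigma>) \<le> R" and R2: "\<forall>\<sigma>\<in>{0..b}. norm (y2 \<sigma>) \<le> R"
      and s: "s \<in> {0..b}" and D: "\<forall>\<sigma>\<in>{0..s}. norm (y1 \<sigma> - y2 \<sigma>) \<le> D" by auto
    have D0: "0 \<le> D" using D s by (meson atLeastAtMost_iff norm_ge_zero order_trans order_refl)
    have gd: "\<forall>\<sigma>\<in>{0..s}. \<bar>g (y1 \<sigma>) - g (y2 \<sigma>)\<bar> \<le> Lg * D"
    proof
      fix \<sigma> assume \<sigma>: "\<sigma> \<in> {0..s}"
      then have "\<bar>g (y1 \<sigma>) - g (y2 \<sigma>)\<bar> \<le> Lg * norm (y1 \<sigma> - y2 \<sigma>)" using gL R1 R2 s by auto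
      also have "\<dots> \<le> Lg * D" using D \<sigma> Lg by (auto intro: mult_left_mono)
      finally show "\<bar>g (y1 \<sigma>) - g (y2 \<sigma>)\<bar> \<le> Lg * D" .
    qed
    have dU: "\<bar>U b y1 s - U b y2 s\<bar> \<le> s * (\<bar>k\<bar> * (Lg * D))" by (rule U_diff_bound[OF b(1) c1 c2 s gd])
    also have "\<dots> \<le> b0 * (\<bar>k\<bar> * (Lg * D))" using s b Lg D0 by (intro mult_right_mono) auto
    finally have dU': "\<bar>U b y1 s - U b y2 s\<bar> \<le> b0 * (\<bar>k\<bar> * Lg) * D" by (simp add: mult.assoc)
    have dy: "norm (y1 s - y2 s) \<le> D" using D s by auto
    have dg: "\<bar>g (y1 s) - g (y2 s)\<bar> \<le> Lg * D" using gd s by auto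
    define z1 where "z1 = (y1 s, U b y1 s + tp * k * (r - g (y1 s)))"
    define z2 where "z2 = (y2 s, U b y2 s + tp * k * (r - g (y2 s)))"
    have "norm (z1 - z2) \<le> norm (y1 s - y2 s) + \<bar>(U b y1 s - U b y2 s) + tp * k * (g (y2 s) - g (y1 s))\<bar>"
      using norm_Pair_le[of "y1 s - y2 s" "(U b y1 s - U b y2 s) + tp * k * (g (y2 s) - g (y1 s))"]
      by (simp add: z1_def z2_def algebra_simps)
    also have "\<dots> \<le> D + (b0 * (\<bar>k\<bar> * Lg) * D + \<bar>tp * k\<bar> * (Lg * D))"
    proof -
      have "\<bar>tp * k * (g (y2 s) - g (y1 s))\<bar> \<le> \<bar>tp * k\<bar> * (Lg * D)"
        using dg by (simp add: abs_mult abs_minus_commute mult_left_mono)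
      then show ?thesis using dy dU' abs_triangle_ineq[of "U b y1 s - U b y2 s" "tp * k * (g (y2 s) - g (y1 s))"]
        by linarith
    qed
    also have "\<dots> = (1 + b0 * (\<bar>k\<bar> * Lg) + \<bar>tp * k\<bar> * Lg) * D" by (simp add: algebra_simps)
    finally have nz: "norm (z1 - z2) \<le> (1 + b0 * (\<bar>k\<bar> * Lg) + \<bar>tp * k\<bar> * Lg) * D" .
    have "norm (f z1 - f z2) \<le> Lf * norm (z1 - z2)"
      using fL arg[OF b c1 R1 s] arg[OF b c2 R2 s] unfolding z1_def z2_def by blast
    also have "\<dots> \<le> Lf * ((1 + b0 * (\<bar>k\<bar> * Lg) + \<bar>tp * k\<bar> * Lg) * D)" by (rule mult_left_mono[OF nz Lf])
    also have "\<dots> = C * D" by (simp add: C_def)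
    finally show "norm (F b y1 s - F b y2 s) \<le> C * D" unfolding F_def z1_def z2_def .
  qed
  show ?thesis using C M P1 P2 by blast
qed


lemma cont_bound:
  fixes y :: "real \<Rightarrow> 'a::real_normed_vector"
  assumes "continuous_on {a..b} y"
  shows "\<exists>R\<ge>0. \<forall>\<sigma>\<in>{a..b}. norm (y \<sigma>) \<le> R"
proof -
  have "bounded (y ` {a..b})" by (rule compact_imp_bounded[OF compact_continuous_image[OF assms compact_Icc]])
  then obtain B where "B > 0" "\<forall>x\<in>y ` {a..b}. norm x \<le> B" using bounded_pos by blast
  then show ?thesis by (intro exI[of _ B]) auto
qed

lemma isol_init: "isol b y \<Longrightarrow> 0 \<le> b \<Longrightarrow> y 0 = x0"
  unfolding isol_def by auto

lemma isol_cont: "isol b y \<Longrightarrow> continuous_on {0..b} y"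
  unfolding isol_def by auto

lemma isol_step:
  assumes y: "isol b y" and at: "0 \<le> a" "a \<le> t" "t \<le> b"
  shows "y t = y a + integral {a..t} (F b y)"
proof -
  have b: "0 \<le> b" using at by simp
  have int: "F b y integrable_on {0..t}"
    by (rule integrable_continuous_real) (rule continuous_on_subset[OF F_cont[OF b isol_cont[OF y]]], use at in auto)
  have "integral {0..a} (F b y) + integral {a..t} (F b y) = integral {0..t} (F b y)"
    by (rule Henstock_Kurzweil_Integration.integral_combine[OF at(1,2) int])
  moreover have "y t = x0 + integral {0..t} (F b y)" "y a = x0 + integral {0..a} (F b y)"
    using y at unfolding isol_def by auto
  ultimately show ?thesis by (simp add: algebra_simps)
qed

lemma isol_unique:
  assumes b: "0 \<le> b" and y1: "isol b y1" and y2: "isol b y2" and t: "t \<in> {0..b}"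
  shows "y1 t = y2 t"
proof -
  have c1: "continuous_on {0..b} y1" and c2: "continuous_on {0..b} y2" using y1 y2 by (auto simp: isol_def)
  obtain R1 where R1: "R1 \<ge> 0" "\<forall>\<sigma>\<in>{0..b}. norm (y1 \<sigma>) \<le> R1" using cont_bound[OF c1] by blast
  obtain R2 where R2: "R2 \<ge> 0" "\<forall>\<sigma>\<in>{0..b}. norm (y2 \<sigma>) \<le> R2" using cont_bound[OF c2] by blast
  define R where "R = max R1 R2"
  have yR1: "\<forall>\<sigma>\<in>{0..b}. norm (y1 \<sigma>) \<le> R" and yR2: "\<forall>\<sigma>\<in>{0..b}. norm (y2 \<sigma>) \<le> R"
    using R1 R2 by (auto simp: R_def intro: order_trans)
  obtain C M where C: "0 \<le> C" and
    CL: "\<forall>b' y1 y2 s D. 0 \<le> b' \<and> b' \<le> b \<and> continuous_on {0..b'} y1 \<and> continuous_on {0..b'} y2 \<and>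
       (\<forall>\<sigma>\<in>{0..b'}. norm (y1 \<sigma>) \<le> R) \<and> (\<forall>\<sigma>\<in>{0..b'}. norm (y2 \<sigma>) \<le> R) \<and> s \<in> {0..b'} \<and>
       (\<forall>\<sigma>\<in>{0..s}. norm (y1 \<sigma> - y2 \<sigma>) \<le> D) \<longrightarrow> norm (F b' y1 s - F b' y2 s) \<le> C * D"
  proof -
    have R0: "0 \<le> R" using R1 by (simp add: R_def)
    show ?thesis using F_consts[OF R0 b] that by blast
  qed
  define h where "h = 1 / (2 * (C + 1))"
  have h: "h > 0" using C by (simp add: h_def)
  have hC: "h * C \<le> 1/2" using C by (simp add: h_def field_simps)
  define \<delta> where "\<delta> = (\<lambda>t. norm (y1 t - y2 t))"
  have cd: "continuous_on {0..b} \<delta>" unfolding \<delta>_def by (intro continuous_intros c1 c2)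
  have ind: "\<forall>t\<in>{0..min b (real n * h)}. y1 t = y2 t" for n
  proof (induction n)
    case 0
    then show ?case using isol_init[OF y1 b] isol_init[OF y2 b] by auto
  next
    case (Suc n)
    define a where "a = min b (real n * h)"
    define a' where "a' = min b (real (Suc n) * h)"
    have aa: "0 \<le> a" "a \<le> a'" "a' \<le> b" "a' - a \<le> h" using h b
      by (auto simp: a_def a'_def min_def algebra_simps)
    obtain tm where tm: "tm \<in> {0..a'}" "\<forall>t\<in>{0..a'}. \<delta> t \<le> \<delta> tm"
      using continuous_attains_sup[of "{0..a'}" \<delta>] continuous_on_subset[OF cd, of "{0..a'}"] aa by auto
    define D where "D = \<delta> tm"
    have Dall: "\<forall>t\<in>{0..a'}. \<delta> t \<le> D" using tm by (simp add: D_def)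
    have bnd: "\<delta> t \<le> h * C * D" if t: "t \<in> {0..a'}" for t
    proof (cases "t \<le> a")
      case True
      then have "\<delta> t = 0" using Suc.IH t by (simp add: a_def \<delta>_def)
      moreover have "0 \<le> h * C * D" using h C by (simp add: D_def \<delta>_def)
      ultimately show ?thesis by simp
    next
      case False
      have st1: "y1 t = y1 a + integral {a..t} (F b y1)" by (rule isol_step[OF y1]) (use aa t False in auto)
      have st2: "y2 t = y2 a + integral {a..t} (F b y2)" by (rule isol_step[OF y2]) (use aa t False in auto)
      have ya: "y1 a = y2 a" using Suc.IH aa by (simp add: a_def)
      have cF1: "continuous_on {a..t} (F b y1)"
        by (rule continuous_on_subset[OF F_cont[OF b c1]]) (use aa t in auto)
      have cF2: "continuous_on {a..t} (F b y2)"
        by (rule continuous_on_subset[OF F_cont[OF b c2]]) (use aa t in auto)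
      have "y1 t - y2 t = integral {a..t} (\<lambda>s. F b y1 s - F b y2 s)"
        using st1 st2 ya by (simp add: integral_diff integrable_continuous_real cF1 cF2)
      then have "\<delta> t = norm (integral {a..t} (\<lambda>s. F b y1 s - F b y2 s))" by (simp add: \<delta>_def)
      also have "\<dots> \<le> (C * D) * (t - a)"
      proof (rule integral_bound)
        show "a \<le> t" using False by simp
        show "continuous_on {a..t} (\<lambda>s. F b y1 s - F b y2 s)" by (intro continuous_intros cF1 cF2)
        fix s assume s: "s \<in> {a..t}"
        have "\<forall>\<sigma>\<in>{0..s}. norm (y1 \<sigma> - y2 \<sigma>) \<le> D"
          using Dall s t aa unfolding \<delta>_def by auto
        then show "norm (F b y1 s - F b y2 s) \<le> C * D"
          using CL[rule_format, of b y1 y2 s D] b c1 c2 yR1 yR2 s t aa by auto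
      qed
      also have "\<dots> \<le> (C * D) * h"
        using t aa C by (intro mult_left_mono) (auto simp: D_def \<delta>_def)
      finally show ?thesis by (simp add: algebra_simps)
    qed
    have "D \<le> h * C * D" using bnd tm by (simp add: D_def)
    also have "\<dots> \<le> (1/2) * D" using hC by (intro mult_right_mono) (auto simp: D_def \<delta>_def)
    finally have "D \<le> 0" by simp
    show ?case
    proof
      fix t assume t: "t \<in> {0..min b (real (Suc n) * h)}"
      then have "norm (y1 t - y2 t) \<le> D" using Dall unfolding a'_def \<delta>_def by blast
      then have "norm (y1 t - y2 t) \<le> 0" using \<open>D \<le> 0\<close> by linarith
      then show "y1 t = y2 t" by simp
    qed
  qed
  obtain n where "b < real n * h" using reals_Archimedean3[OF h] by blast
  then have "t \<in> {0..min b (real n * h)}" using t by auto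
  then show ?thesis using ind[of n] by blast
qed


lemma isol_extend:
  assumes a: "0 \<le> a" and x: "isol a xb"
  shows "\<exists>h>0. \<exists>y. isol (a + h) y \<and> (\<forall>t\<in>{0..a}. y t = xb t)"
proof -
  have cx: "continuous_on {0..a} xb" using x by (simp add: isol_def)
  obtain Bx where Bx: "Bx \<ge> 0" "\<forall>\<sigma>\<in>{0..a}. norm (xb \<sigma>) \<le> Bx" using cont_bound[OF cx] by blast
  define R where "R = Bx + 1"
  define b0 where "b0 = a + 1"
  have R0: "0 \<le> R" and b00: "0 \<le> b0" using Bx a by (auto simp: R_def b0_def)
  obtain C M where C: "0 \<le> C" and M: "0 \<le> M" and
    FM: "\<forall>b y s. 0 \<le> b \<and> b \<le> b0 \<and> continuous_on {0..b} y \<and> (\<forall>\<sigma>\<in>{0..b}. norm (y \<sigma>) \<le> R) \<and> s \<in> {0..b}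
       \<longrightarrow> norm (F b y s) \<le> M" and
    FL: "\<forall>b y1 y2 s D. 0 \<le> b \<and> b \<le> b0 \<and> continuous_on {0..b} y1 \<and> continuous_on {0..b} y2 \<and>
       (\<forall>\<sigma>\<in>{0..b}. norm (y1 \<sigma>) \<le> R) \<and> (\<forall>\<sigma>\<in>{0..b}. norm (y2 \<sigma>) \<le> R) \<and> s \<in> {0..b} \<and>
       (\<forall>\<sigma>\<in>{0..s}. norm (y1 \<sigma> - y2 \<sigma>) \<le> D) \<longrightarrow> norm (F b y1 s - F b y2 s) \<le> C * D"
    using F_consts[OF R0 b00] by blast
  define h where "h = min 1 (min (1 / (M + 1)) (1 / (2 * (C + 1))))"
  have h0: "h > 0" using M C by (simp add: h_def)
  have h1: "h \<le> 1" by (simp add: h_def)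
  have hM: "h * M \<le> 1"
  proof -
    have "h * M \<le> (1 / (M + 1)) * M" using M by (intro mult_right_mono) (auto simp: h_def)
    also have "\<dots> \<le> 1" using M by (simp add: field_simps)
    finally show ?thesis .
  qed
  have hC: "h * C \<le> 1/2"
  proof -
    have "h * C \<le> (1 / (2 * (C + 1))) * C" using C by (intro mult_right_mono) (auto simp: h_def)
    also have "\<dots> \<le> 1/2" using C by (simp add: field_simps)
    finally show ?thesis .
  qed
  define b where "b = a + h"
  have ab: "a \<le> b" "0 \<le> b" "b \<le> b0" using h0 h1 a by (auto simp: b_def b0_def)
  define cl where "cl = (\<lambda>t::real. max a (min b t))"
  have cl: "\<And>t. cl t \<in> {a..b}" using ab by (auto simp: cl_def)
  have ccl: "continuous_on UNIV cl" unfolding cl_def by (intro continuous_intros)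
  define xe where "xe = (\<lambda>t::real. xb (max 0 (min a t)))"
  have cxe: "continuous_on UNIV xe" unfolding xe_def
    by (rule continuous_on_compose2[OF cx]) (auto intro!: continuous_intros simp: a)
  have xeB: "norm (xe t) \<le> Bx" for t using Bx a by (auto simp: xe_def)
  have xe_a: "\<And>t. t \<le> a \<Longrightarrow> 0 \<le> t \<Longrightarrow> xe t = xb t" by (auto simp: xe_def)
  have xe_ge: "\<And>t. a \<le> t \<Longrightarrow> xe t = xb a" using a by (auto simp: xe_def)
  define Pf where "Pf = (\<lambda>(y::real \<Rightarrow>\<^sub>C (real^'n)) t. xe t + integral {a..cl t} (F b (apply_bcontfun y)))"
  have Pf_bc: "Pf y \<in> bcontfun" for y
  proof -
    have cF: "continuous_on {0..b} (F b (apply_bcontfun y))" by (rule F_cont[OF ab(2)]) simp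
    have cI: "continuous_on {a..b} (\<lambda>u. integral {a..u} (F b (apply_bcontfun y)))"
      by (rule indefinite_integral_continuous_1) (rule integrable_continuous_real, rule continuous_on_subset[OF cF], use a in auto)
    obtain K where K: "K \<ge> 0" "\<forall>u\<in>{a..b}. norm (integral {a..u} (F b (apply_bcontfun y))) \<le> K"
      using cont_bound[OF cI] by blast
    have c: "continuous_on UNIV (Pf y)" unfolding Pf_def split_beta
      by (intro continuous_intros cxe continuous_on_compose2[OF cI ccl]) (use cl in auto)
    show ?thesis
    proof (rule bcontfun_normI[OF c])
      fix t
      have "norm (Pf y t) \<le> norm (xe t) + norm (integral {a..cl t} (F b (apply_bcontfun y)))"
        unfolding Pf_def by (simp add: norm_triangle_ineq)
      also have "\<dots> \<le> Bx + K" using xeB K cl by (intro add_mono) auto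
      finally show "norm (Pf y t) \<le> Bx + K" .
    qed
  qed
  define P where "P = (\<lambda>y. Bcontfun (Pf y))"
  have P_app: "apply_bcontfun (P y) = Pf y" for y unfolding P_def by (rule Bcontfun_inverse[OF Pf_bc])
  define S where "S = {y::(real \<Rightarrow>\<^sub>C (real^'n)). (\<forall>t\<le>a. apply_bcontfun y t = xe t) \<and>
      (\<forall>t\<ge>b. apply_bcontfun y t = apply_bcontfun y b) \<and> (\<forall>t\<ge>a. norm (apply_bcontfun y t - xb a) \<le> 1)}"
  have S_R: "\<forall>\<sigma>\<in>{0..b}. norm (apply_bcontfun y \<sigma>) \<le> R" if y: "y \<in> S" for y
  proof
    fix \<sigma> assume \<sigma>: "\<sigma> \<in> {0..b}"
    show "norm (apply_bcontfun y \<sigma>) \<le> R"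
    proof (cases "\<sigma> \<le> a")
      case True
      then show ?thesis using y xeB[of \<sigma>] by (auto simp: S_def R_def)
    next
      case False
      then have "norm (apply_bcontfun y \<sigma> - xb a) \<le> 1" using y by (auto simp: S_def)
      moreover have "norm (xb a) \<le> Bx" using Bx a by auto
      ultimately show ?thesis unfolding R_def using norm_triangle_ineq2[of "apply_bcontfun y \<sigma>" "xb a"] by linarith
    qed
  qed
  have int_bound: "norm (integral {a..cl t} (F b (apply_bcontfun y))) \<le> M * h" if y: "y \<in> S" for y t
  proof -
    have "norm (integral {a..cl t} (F b (apply_bcontfun y))) \<le> M * (cl t - a)"
    proof (rule integral_bound)
      show "a \<le> cl t" using cl by auto
      show "continuous_on {a..cl t} (F b (apply_bcontfun y))"
        by (rule continuous_on_subset[OF F_cont[OF ab(2)]]) (use a cl in auto)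
      fix s assume "s \<in> {a..cl t}"
      then have "s \<in> {0..b}" using cl[of t] a by auto
      then show "norm (F b (apply_bcontfun y) s) \<le> M" using FM[rule_format, of b "apply_bcontfun y" s] ab S_R[OF y] by simp
    qed
    also have "\<dots> \<le> M * h" using cl[of t] M by (intro mult_left_mono) (auto simp: b_def)
    finally show ?thesis .
  qed
  have PS: "P ` S \<subseteq> S"
  proof
    fix z assume "z \<in> P ` S"
    then obtain y where y: "y \<in> S" and z: "z = P y" by blast
    have f1: "\<forall>t\<le>a. Pf y t = xe t"
    proof (intro allI impI)
      fix t assume "t \<le> a"
      then have "cl t = a" by (simp add: cl_def)
      then show "Pf y t = xe t" by (simp add: Pf_def)
    qed
    have f2: "\<forall>t\<ge>b. Pf y t = Pf y b"
    proof (intro allI impI)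
      fix t assume t: "b \<le> t"
      have "a < b" using h0 by (simp add: b_def)
      then show "Pf y t = Pf y b" using t by (simp add: Pf_def cl_def xe_ge)
    qed
    have f3: "\<forall>t\<ge>a. norm (Pf y t - xb a) \<le> 1"
    proof (intro allI impI)
      fix t assume "a \<le> t"
      then have "Pf y t - xb a = integral {a..cl t} (F b (apply_bcontfun y))" by (simp add: Pf_def xe_ge)
      then show "norm (Pf y t - xb a) \<le> 1" using int_bound[OF y, of t] hM by (simp add: mult.commute)
    qed
    show "z \<in> S" unfolding z S_def mem_Collect_eq P_app by (intro conjI f1 f2 f3)
  qed
  have contr: "dist (P y1) (P y2) \<le> (1/2) * dist y1 y2" if y1: "y1 \<in> S" and y2: "y2 \<in> S" for y1 y2
  proof (rule dist_bound)
    fix t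
    define D where "D = dist y1 y2"
    have D: "\<forall>\<sigma>. norm (apply_bcontfun y1 \<sigma> - apply_bcontfun y2 \<sigma>) \<le> D"
      using dist_bounded[of y1 _ y2] by (simp add: D_def dist_norm)
    have "dist (apply_bcontfun (P y1) t) (apply_bcontfun (P y2) t)
        = norm (integral {a..cl t} (\<lambda>s. F b (apply_bcontfun y1) s - F b (apply_bcontfun y2) s))"
      unfolding P_app Pf_def dist_norm using cl a
      by (simp add: integral_diff integrable_continuous_real
          continuous_on_subset[OF F_cont[OF ab(2)]])
    also have "\<dots> \<le> (C * D) * (cl t - a)"
    proof (rule integral_bound)
      show "a \<le> cl t" using cl by auto
      show "continuous_on {a..cl t} (\<lambda>s. F b (apply_bcontfun y1) s - F b (apply_bcontfun y2) s)"
        by (intro continuous_intros continuous_on_subset[OF F_cont[OF ab(2)]]) (use a cl in auto)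
      fix s assume s: "s \<in> {a..cl t}"
      show "norm (F b (apply_bcontfun y1) s - F b (apply_bcontfun y2) s) \<le> C * D"
        using FL[rule_format, of b "apply_bcontfun y1" "apply_bcontfun y2" s D] ab S_R[OF y1] S_R[OF y2] s cl[of t] a D
        by simp
    qed
    also have "\<dots> \<le> (C * D) * h" using cl[of t] C by (intro mult_left_mono) (auto simp: b_def D_def)
    also have "\<dots> = (h * C) * D" by simp
    also have "\<dots> \<le> (1/2) * D" using hC by (intro mult_right_mono) (auto simp: D_def)
    finally show "dist (apply_bcontfun (P y1) t) (apply_bcontfun (P y2) t) \<le> (1/2) * dist y1 y2"
      by (simp add: D_def)
  qed
  have S_eq: "S = (\<Inter>t\<in>{..a}. {y. apply_bcontfun y t = xe t}) \<inter>
      (\<Inter>t\<in>{b..}. {y. apply_bcontfun y t = apply_bcontfun y b}) \<inter>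
      (\<Inter>t\<in>{a..}. {y. norm (apply_bcontfun y t - xb a) \<le> 1})"
    unfolding S_def by auto
  have c1: "closed {y::real \<Rightarrow>\<^sub>C (real^'n). apply_bcontfun y t = xe t}" for t
    by (rule closed_Collect_eq[OF eval_cont continuous_on_const])
  have c2: "closed {y::real \<Rightarrow>\<^sub>C (real^'n). apply_bcontfun y t = apply_bcontfun y b}" for t
    by (rule closed_Collect_eq[OF eval_cont eval_cont])
  have c3: "closed {y::real \<Rightarrow>\<^sub>C (real^'n). norm (apply_bcontfun y t - xb a) \<le> 1}" for t
    by (rule closed_Collect_le[OF _ continuous_on_const])
       (intro continuous_on_norm continuous_on_diff eval_cont continuous_on_const)
  have clS: "closed S" unfolding S_eq
    by (intro closed_Int closed_INT ballI c1 c2 c3)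
  have xeS: "Bcontfun xe \<in> S"
  proof -
    have "xe \<in> bcontfun" by (rule bcontfun_normI[OF cxe xeB])
    then have e: "apply_bcontfun (Bcontfun xe) = xe" by (rule Bcontfun_inverse)
    show ?thesis unfolding S_def mem_Collect_eq e using ab by (auto simp: xe_ge)
  qed
  have cS: "complete S" using clS complete_eq_closed by blast
  have neS: "S \<noteq> {}" using xeS by blast
  have "\<exists>!y. y \<in> S \<and> P y = y"
    by (rule Banach_fix[OF cS neS _ _ PS contr]) auto
  then obtain y where yS: "y \<in> S" and yP: "P y = y" by blast
  define Y where "Y = apply_bcontfun y"
  have YP: "Y t = Pf y t" for t
  proof -
    have "Y t = apply_bcontfun (P y) t" by (simp add: yP Y_def)
    then show ?thesis by (simp add: P_app)
  qed
  have cY: "continuous_on {0..b} Y" by (simp add: Y_def)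
  have Yxb: "\<forall>t\<in>{0..a}. Y t = xb t" using yS by (auto simp: S_def Y_def xe_a)
  have Feq: "\<And>s. s \<in> {0..a} \<Longrightarrow> F b Y s = F a xb s"
    by (rule F_restrict[OF a ab(1) cx cY Yxb])
  have int_a: "\<And>t. t \<in> {0..a} \<Longrightarrow> integral {0..t} (F b Y) = integral {0..t} (F a xb)"
    by (rule integral_cong) (use Feq in auto)
  have "isol b Y" unfolding isol_def
  proof (intro conjI ballI cY)
    fix t assume t: "t \<in> {0..b}"
    show "Y t = x0 + integral {0..t} (F b Y)"
    proof (cases "t \<le> a")
      case True
      then have "Y t = xb t" using Yxb t by auto
      also have "\<dots> = x0 + integral {0..t} (F a xb)" using x t True by (auto simp: isol_def)
      finally show ?thesis using int_a t True by simp
    next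
      case False
      have "cl t = t" using t False by (simp add: cl_def)
      then have "Y t = xe t + integral {a..t} (F b Y)"
        using YP[of t] by (simp add: Pf_def Y_def)
      also have "xe t = x0 + integral {0..a} (F b Y)"
        using xe_ge[of a] xe_ge[of t] False x a int_a[of a] by (auto simp: isol_def)
      finally have "Y t = x0 + (integral {0..a} (F b Y) + integral {a..t} (F b Y))" by simp
      also have "integral {0..a} (F b Y) + integral {a..t} (F b Y) = integral {0..t} (F b Y)"
        by (rule Henstock_Kurzweil_Integration.integral_combine)
           (use a False t in \<open>auto intro!: integrable_continuous_real continuous_on_subset[OF F_cont[OF ab(2) cY]]\<close>)
      finally show ?thesis .
    qed
  qed
  then show ?thesis using h0 Yxb unfolding b_def by blast
qed

end



context clsys
begin

lemma W_eq: "W y = (\<lambda>s. k * (r - g (y s)))"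
  by (rule ext) (simp add: W_def)

lemma isol_cl:
  assumes b: "0 < b" and y: "isol b y"
  shows "cl_traj f g umin umax k tp r x0 u0 (ereal b) y (U b y)"
  unfolding cl_traj_def
proof (intro conjI allI impI)
  have b0: "0 \<le> b" using b by simp
  have cy: "continuous_on {0..b} y" using y by (simp add: isol_def)
  show "y 0 = x0" by (rule isol_init[OF y b0])
  show "U b y 0 = u0" by (rule traj_init[OF um b0 W_cont[OF cy] U_traj[OF b0 cy]])
  fix t assume t: "0 \<le> t \<and> ereal t < ereal b"
  then have tb: "t \<in> {0..b}" by auto
  have d: "((\<lambda>s. x0 + integral {0..s} (F b y)) has_vector_derivative F b y t) (at t within {0..b})"
    using integral_has_vector_derivative[OF F_cont[OF b0 cy] tb]
    by (auto intro!: derivative_eq_intros)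
  have "(y has_vector_derivative F b y t) (at t within {0..b})"
    by (rule has_vector_derivative_transform[OF tb _ d]) (use y in \<open>auto simp: isol_def\<close>)
  then have "(y has_vector_derivative F b y t) (at t within {s. 0 \<le> s \<and> ereal s < ereal b})"
    by (rule has_vector_derivative_within_subset) auto
  then show "(y has_vector_derivative f (y t, U b y t + tp * k * (r - g (y t))))
      (at t within {s. 0 \<le> s \<and> ereal s < ereal b})" by (simp add: F_def)
  have "sat_traj_on umin umax t u0 (W y) (U b y)"
    by (rule traj_restrict[OF um _ _ W_cont[OF cy] U_traj[OF b0 cy]]) (use t in auto)
  then show "sat_traj_on umin umax t u0 (\<lambda>s. k * (r - g (y s))) (U b y)" by (simp add: W_eq)
qed

lemma cl_isol:
  assumes cl: "cl_traj f g umin umax k tp r x0 u0 \<tau> x u" and t: "0 \<le> t" "ereal t < \<tau>"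
  shows "isol t x \<and> (\<forall>s\<in>{0..t}. u s = U t x s)"
proof -
  have x0: "x 0 = x0" using cl by (simp add: cl_traj_def)
  have der: "(x has_vector_derivative f (x s, u s + tp * k * (r - g (x s)))) (at s within {0..t'})"
    if s: "s \<in> {0..t'}" and t': "t' \<le> t" for s t'
  proof -
    have "ereal s < \<tau>" using s t t' by (meson atLeastAtMost_iff ereal_less_eq(3) le_less_trans order_trans)
    then have "(x has_vector_derivative f (x s, u s + tp * k * (r - g (x s)))) (at s within {s. 0 \<le> s \<and> ereal s < \<tau>})"
      using cl s unfolding cl_traj_def by auto
    then show ?thesis
    proof (rule has_vector_derivative_within_subset)
      show "{0..t'} \<subseteq> {s. 0 \<le> s \<and> ereal s < \<tau>}"
      proof
        fix z assume "z \<in> {0..t'}"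
        then have "ereal z \<le> ereal t" using t' by auto
        then have "ereal z < \<tau>" using t(2) by (rule le_less_trans)
        then show "z \<in> {s. 0 \<le> s \<and> ereal s < \<tau>}" using \<open>z \<in> {0..t'}\<close> by auto
      qed
    qed
  qed
  have cx: "continuous_on {0..t} x"
    unfolding continuous_on_eq_continuous_within
  proof
    fix s assume "s \<in> {0..t}"
    then show "continuous (at s within {0..t}) x" by (rule has_vector_derivative_continuous[OF der]) simp
  qed
  have trj: "sat_traj_on umin umax t u0 (\<lambda>s. k * (r - g (x s))) u" using cl t unfolding cl_traj_def by auto
  have ueq: "\<forall>s\<in>{0..t}. u s = U t x s"
  proof
    fix s assume s: "s \<in> {0..t}"
    show "u s = U t x s"
      by (rule traj_unique[OF um t(1) W_cont[OF cx] _ U_traj[OF t(1) cx] s]) (use trj in \<open>simp add: W_eq\<close>)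
  qed
  have "\<forall>t'\<in>{0..t}. x t' = x0 + integral {0..t'} (F t x)"
  proof
    fix t' assume t': "t' \<in> {0..t}"
    have t'': "0 \<le> t'" "t' \<le> t" using t' by auto
    have "((\<lambda>s. f (x s, u s + tp * k * (r - g (x s)))) has_integral (x t' - x 0)) {0..t'}"
    proof (rule fundamental_theorem_of_calculus[OF t''(1)])
      fix s assume "s \<in> {0..t'}"
      then show "(x has_vector_derivative f (x s, u s + tp * k * (r - g (x s)))) (at s within {0..t'})"
        by (rule der[OF _ t''(2)])
    qed
    moreover have eqF: "\<And>s. s \<in> {0..t'} \<Longrightarrow> f (x s, u s + tp * k * (r - g (x s))) = F t x s"
      using ueq t' by (auto simp: F_def)
    ultimately have "(F t x has_integral (x t' - x 0)) {0..t'}"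
      by (rule has_integral_eq[rotated])
    then show "x t' = x0 + integral {0..t'} (F t x)" using x0 by (simp add: integral_unique)
  qed
  then show ?thesis using cx ueq by (simp add: isol_def)
qed


lemma isol_zero: "isol 0 (\<lambda>_. x0)"
  unfolding isol_def by auto

lemma exist_local: "\<exists>h>0. \<exists>y. isol h y"
  using isol_extend[OF order_refl isol_zero] by auto

lemma main_exist:
  "\<exists>\<tau>::ereal. \<tau> > 0 \<and> (\<exists>x u. cl_traj f g umin umax k tp r x0 u0 \<tau> x u) \<and>
     (\<forall>x u x' u'. cl_traj f g umin umax k tp r x0 u0 \<tau> x u \<and> cl_traj f g umin umax k tp r x0 u0 \<tau> x' u' \<longrightarrow>
        (\<forall>t. 0 \<le> t \<and> ereal t < \<tau> \<longrightarrow> x t = x' t \<and> u t = u' t))"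
proof -
  obtain h y where h: "h > 0" and y: "isol h y" using exist_local by blast
  show ?thesis
  proof (intro exI[of _ "ereal h"] conjI allI impI)
    show "ereal h > 0" using h by simp
    show "\<exists>x u. cl_traj f g umin umax k tp r x0 u0 (ereal h) x u" using isol_cl[OF h y] by blast
    fix x u x' u' t
    assume cl: "cl_traj f g umin umax k tp r x0 u0 (ereal h) x u \<and> cl_traj f g umin umax k tp r x0 u0 (ereal h) x' u'"
      and t: "0 \<le> t \<and> ereal t < ereal h"
    have i1: "isol t x" "\<forall>s\<in>{0..t}. u s = U t x s" using cl_isol[of "ereal h" x u t] cl t by auto
    have i2: "isol t x'" "\<forall>s\<in>{0..t}. u' s = U t x' s" using cl_isol[of "ereal h" x' u' t] cl t by auto
    have t0: "0 \<le> t" using t by simp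
    have eqx: "\<forall>s\<in>{0..t}. x' s = x s" using isol_unique[OF t0 i1(1) i2(1)] by auto
    show "x t = x' t" using eqx t0 by auto
    have "U t x' t = U t x t"
      by (rule U_restrict[OF t0 order_refl isol_cont[OF i1(1)] isol_cont[OF i2(1)] eqx]) (use t0 in auto)
    then show "u t = u' t" using i1(2) i2(2) t0 by auto
  qed
qed

lemma lim_extend:
  assumes T: "T > 0" and cl: "cl_traj f g umin umax k tp r x0 u0 (ereal T) x u"
    and B: "\<forall>t\<in>{0..<T}. norm (x t) \<le> B"
  shows "\<exists>xb. isol T xb \<and> (\<forall>t\<in>{0..<T}. xb t = x t)"
proof -
  have ci: "isol t x \<and> (\<forall>s\<in>{0..t}. u s = U t x s)" if "t \<in> {0..<T}" for t
    using cl_isol[OF cl, of t] that by auto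
  have B0: "0 \<le> B" using B T by (meson atLeastLessThan_iff norm_ge_zero order_trans order_refl)
  have T0: "0 \<le> T" using T by simp
  obtain C M where M: "0 \<le> M" and
    FM: "\<forall>b y s. 0 \<le> b \<and> b \<le> T \<and> continuous_on {0..b} y \<and> (\<forall>\<sigma>\<in>{0..b}. norm (y \<sigma>) \<le> B) \<and> s \<in> {0..b}
       \<longrightarrow> norm (F b y s) \<le> M"
    using F_consts[OF B0 T0] by blast
  have lip: "M-lipschitz_on {0..<T} x"
  proof (rule lipschitz_onI[OF _ M])
    have main: "dist (x t) (x s) \<le> M * dist t s" if st: "s \<le> t" "s \<in> {0..<T}" "t \<in> {0..<T}" for s t
    proof -
      have it: "isol t x" using ci st by auto
      have "x t = x s + integral {s..t} (F t x)" by (rule isol_step[OF it]) (use st in auto)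
      then have "dist (x t) (x s) = norm (integral {s..t} (F t x))" by (simp add: dist_norm)
      also have "\<dots> \<le> M * (t - s)"
      proof (rule integral_bound)
        show "s \<le> t" by fact
        show "continuous_on {s..t} (F t x)"
          by (rule continuous_on_subset[OF F_cont[OF _ isol_cont[OF it]]]) (use st in auto)
        fix \<sigma> assume \<sigma>: "\<sigma> \<in> {s..t}"
        show "norm (F t x \<sigma>) \<le> M"
          using FM[rule_format, of t x \<sigma>] st \<sigma> B isol_cont[OF it] by auto
      qed
      finally show ?thesis using st by (simp add: dist_real_def)
    qed
    fix s t assume "s \<in> {0..<T}" "t \<in> {0..<T}"
    then show "dist (x s) (x t) \<le> M * dist s t"
      using main[of s t] main[of t s] by (cases "s \<le> t") (auto simp: dist_commute)
  qed
  obtain xb where xb: "M-lipschitz_on (closure {0..<T}) xb" "\<forall>t\<in>{0..<T}. xb t = x t"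
    using lipschitz_extend_closure[OF lip] by blast
  have cl_eq: "closure {0..<T} = {0..T}" using T by simp
  have cxb: "continuous_on {0..T} xb" using lipschitz_on_continuous_on[OF xb(1)] cl_eq by simp
  have eq_lt: "xb t = x0 + integral {0..t} (F T xb)" if t: "t \<in> {0..<T}" for t
  proof -
    have it: "isol t x" using ci t by auto
    have t0: "0 \<le> t" "t \<le> T" using t by auto
    have "xb t = x0 + integral {0..t} (F t x)" using xb(2) t it by (auto simp: isol_def)
    also have "integral {0..t} (F t x) = integral {0..t} (F T xb)"
    proof (rule integral_cong)
      fix s assume s: "s \<in> {0..t}"
      show "F t x s = F T xb s"
        by (rule F_restrict[OF t0 isol_cont[OF it] cxb _ s, symmetric]) (use xb(2) t in auto)
    qed
    finally show ?thesis .
  qed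
  define h where "h = (\<lambda>t. xb t - (x0 + integral {0..t} (F T xb)))"
  have ch: "continuous_on {0..T} h" unfolding h_def
    by (intro continuous_intros cxb indefinite_integral_continuous_1 integrable_continuous_real F_cont T0)
  have "closed {t \<in> {0..T}. h t = 0}" by (rule continuous_closed_preimage_constant[OF ch closed_atLeastAtMost])
  moreover have "{0..<T} \<subseteq> {t \<in> {0..T}. h t = 0}" using eq_lt by (auto simp: h_def)
  ultimately have "closure {0..<T} \<subseteq> {t \<in> {0..T}. h t = 0}" by (intro closure_minimal)
  then have "\<forall>t\<in>{0..T}. h t = 0" using cl_eq by auto
  then have "isol T xb" unfolding isol_def h_def using cxb by auto
  then show ?thesis using xb(2) by blast
qed

lemma main_blowup:
  assumes cl: "cl_traj f g umin umax k tp r x0 u0 (ereal T) x u"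
    and nx: "\<not> (\<exists>\<tau>'::ereal. \<tau>' > ereal T \<and>
               (\<exists>x' u'. cl_traj f g umin umax k tp r x0 u0 \<tau>' x' u' \<and>
                  (\<forall>t\<in>{0..<T}. x' t = x t \<and> u' t = u t)))"
  shows "Limsup (at_left T) (\<lambda>t. ereal (norm (x t))) = \<infinity>"
proof (rule ccontr)
  assume ls: "Limsup (at_left T) (\<lambda>t. ereal (norm (x t))) \<noteq> \<infinity>"
  show False
  proof (cases "T \<le> 0")
    case True
    obtain h y where h: "h > 0" and y: "isol h y" using exist_local by blast
    have "ereal h > ereal T" using h True by simp
    moreover have "cl_traj f g umin umax k tp r x0 u0 (ereal h) y (U h y)" by (rule isol_cl[OF h y])
    moreover have "\<forall>t\<in>{0..<T}. y t = x t \<and> U h y t = u t" using True by auto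
    ultimately show False using nx by blast
  next
    case False
    then have T: "T > 0" by simp
    obtain n :: nat where n: "Limsup (at_left T) (\<lambda>t. ereal (norm (x t))) < ereal (real n)"
      using ls less_PInf_Ex_of_nat by blast
    have "eventually (\<lambda>t. ereal (norm (x t)) < ereal (real n)) (at_left T)"
      by (rule Limsup_lessD[OF n])
    then obtain b0 where b0: "b0 < T" "\<forall>t>b0. t < T \<longrightarrow> ereal (norm (x t)) < ereal (real n)"
      unfolding eventually_at_left_field by blast
    define t1 where "t1 = max 0 b0"
    have t1: "0 \<le> t1" "t1 < T" using b0 T by (auto simp: t1_def)
    have "isol t1 x" using cl_isol[OF cl t1(1)] t1 by auto
    then obtain B1 where B1: "\<forall>\<sigma>\<in>{0..t1}. norm (x \<sigma>) \<le> B1" using cont_bound[OF isol_cont] by blast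
    define B where "B = max B1 (real n)"
    have B: "\<forall>t\<in>{0..<T}. norm (x t) \<le> B"
    proof
      fix t assume t: "t \<in> {0..<T}"
      show "norm (x t) \<le> B"
      proof (cases "t \<le> t1")
        case True
        then show ?thesis using B1 t by (auto simp: B_def intro: le_max_iff_disj[THEN iffD2])
      next
        case False
        then have "t > b0" by (simp add: t1_def)
        then have "norm (x t) < real n" using b0(2) t by auto
        then show ?thesis by (simp add: B_def)
      qed
    qed
    obtain xb where xb: "isol T xb" "\<forall>t\<in>{0..<T}. xb t = x t" using lim_extend[OF T cl B] by blast
    obtain h y where h: "h > 0" and y: "isol (T + h) y" and yx: "\<forall>t\<in>{0..T}. y t = xb t"
      using isol_extend[OF _ xb(1)] T by auto
    have Th: "0 < T + h" using T h by simp
    have clY: "cl_traj f g umin umax k tp r x0 u0 (ereal (T + h)) y (U (T + h) y)" by (rule isol_cl[OF Th y])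
    have agree: "\<forall>t\<in>{0..<T}. y t = x t \<and> U (T + h) y t = u t"
    proof
      fix t assume t: "t \<in> {0..<T}"
      have t0: "0 \<le> t" "t \<le> T + h" using t h by auto
      have ci: "isol t x" "\<forall>s\<in>{0..t}. u s = U t x s" using cl_isol[OF cl, of t] t by auto
      have yxt: "\<forall>s\<in>{0..t}. y s = x s" using yx xb(2) t by auto
      have "U (T + h) y t = U t x t"
        by (rule U_restrict[OF t0 isol_cont[OF ci(1)] isol_cont[OF y] yxt]) (use t0 in auto)
      then show "y t = x t \<and> U (T + h) y t = u t" using yxt ci(2) t0 by auto
    qed
    have "ereal (T + h) > ereal T" using h by simp
    then show False using nx clY agree by blast
  qed
qed

end



lemma C1_lip:
  fixes f :: "'a::euclidean_space \<Rightarrow> 'b::real_normed_vector"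
  assumes d: "\<forall>z. (f has_derivative blinfun_apply (f' z)) (at z)"
    and d2: "\<forall>z. (f' has_derivative blinfun_apply (f'' z)) (at z)"
  shows "\<exists>L. \<forall>a b. norm a \<le> R \<longrightarrow> norm b \<le> R \<longrightarrow> norm (f a - f b) \<le> L * norm (a - b)"
proof -
  have cf': "continuous_on (cball 0 R) f'"
    by (rule continuous_at_imp_continuous_on) (use d2 has_derivative_continuous in blast)
  have "bounded (f' ` cball 0 R)" by (rule compact_imp_bounded[OF compact_continuous_image[OF cf' compact_cball]])
  then obtain B where B: "\<forall>z\<in>cball 0 R. norm (f' z) \<le> B" by (auto simp: bounded_iff)
  show ?thesis
  proof (intro exI[of _ B] allI impI)
    fix a b :: 'a assume a: "norm a \<le> R" and b: "norm b \<le> R"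
    show "norm (f a - f b) \<le> B * norm (a - b)"
    proof (rule differentiable_bound[of "cball 0 R" f "\<lambda>z. blinfun_apply (f' z)" B])
      show "convex (cball (0::'a) R)" by simp
      fix x assume x: "x \<in> cball (0::'a) R"
      show "(f has_derivative blinfun_apply (f' x)) (at x within cball 0 R)"
        using d has_derivative_at_withinI by blast
      show "onorm (blinfun_apply (f' x)) \<le> B" using B x by (simp add: norm_blinfun.rep_eq[symmetric])
    qed (use a b in auto)
  qed
qed

theorem proposition1:
  fixes f :: "((real^'n) \<times> real) \<Rightarrow> real^'n"
    and g :: "real^'n \<Rightarrow> real"
    and umin umax :: real
  assumes umin_less: "umin < umax"
    and f_C2: "\<exists>f' f''.
        (\<forall>z. (f has_derivative blinfun_apply (f' z)) (at z)) \<and>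
        (\<forall>z. (f' has_derivative blinfun_apply (f'' z)) (at z)) \<and>
        continuous_on UNIV f''"
    and g_loc_lip: "\<forall>K. compact K \<longrightarrow> (\<exists>L. L-lipschitz_on K g)"
  shows "\<forall>(k::real) (\<tau>p::real) (x0::real^'n) (\<delta>::real) (u0::real) (r::real).
     k \<ge> 0 \<and> \<tau>p \<ge> 0 \<and> \<delta> > 0 \<and> u0 \<in> {umin - \<delta> .. umax + \<delta>} \<longrightarrow>
       (\<exists>\<tau>::ereal. \<tau> > 0 \<and>
          (\<exists>x u. cl_traj f g umin umax k \<tau>p r x0 u0 \<tau> x u) \<and>
          (\<forall>x u x' u'. cl_traj f g umin umax k \<tau>p r x0 u0 \<tau> x u \<and>
                       cl_traj f g umin umax k \<tau>p r x0 u0 \<tau> x' u' \<longrightarrow>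
             (\<forall>t. 0 \<le> t \<and> ereal t < \<tau> \<longrightarrow> x t = x' t \<and> u t = u' t))) \<and>
       (\<forall>(T::real) x u.
          cl_traj f g umin umax k \<tau>p r x0 u0 (ereal T) x u \<and>
          \<not> (\<exists>\<tau>'::ereal. \<tau>' > ereal T \<and>
               (\<exists>x' u'. cl_traj f g umin umax k \<tau>p r x0 u0 \<tau>' x' u' \<and>
                  (\<forall>t\<in>{0..<T}. x' t = x t \<and> u' t = u t)))
          \<longrightarrow> Limsup (at_left T) (\<lambda>t. ereal (norm (x t))) = \<infinity>)"
proof -
  obtain f' f'' where d: "\<forall>z. (f has_derivative blinfun_apply (f' z)) (at z)"
    and d2: "\<forall>z. (f' has_derivative blinfun_apply (f'' z)) (at z)"
    using f_C2 by blast
  have f_lip: "\<exists>L. \<forall>a b. norm a \<le> R \<longrightarrow> norm b \<le> R \<longrightarrow> norm (f a - f b) \<le> L * norm (a - b)" for R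
    by (rule C1_lip[OF d d2])
  have f_cont: "continuous_on UNIV f"
    by (rule continuous_at_imp_continuous_on) (use d has_derivative_continuous in blast)
  have g_lip: "\<exists>L. \<forall>a b. norm a \<le> R \<longrightarrow> norm b \<le> R \<longrightarrow> \<bar>g a - g b\<bar> \<le> L * norm (a - b)" for R
  proof -
    obtain L where "L-lipschitz_on (cball 0 R) g" using g_loc_lip compact_cball by blast
    then have "\<forall>a\<in>cball 0 R. \<forall>b\<in>cball 0 R. dist (g a) (g b) \<le> L * dist a b" by (simp add: lipschitz_on_def)
    then show ?thesis by (intro exI[of _ L]) (auto simp: dist_real_def dist_norm)
  qed
  have g_cont: "continuous_on UNIV g"
  proof (rule continuous_at_imp_continuous_on, intro ballI)
    fix z :: "real^'n"
    obtain L where "L-lipschitz_on (cball z 1) g" using g_loc_lip compact_cball by blast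
    then have "continuous_on (cball z 1) g" by (rule lipschitz_on_continuous_on)
    then show "isCont g z" by (rule continuous_on_interior) simp
  qed
  show ?thesis
  proof (intro allI impI)
    fix k \<tau>p :: real and x0 :: "real^'n" and \<delta> u0 r :: real
    interpret clsys f g umin umax k \<tau>p r u0 x0
      by unfold_locales (use umin_less f_lip g_lip f_cont g_cont in auto)
    show "(\<exists>\<tau>::ereal. \<tau> > 0 \<and>
          (\<exists>x u. cl_traj f g umin umax k \<tau>p r x0 u0 \<tau> x u) \<and>
          (\<forall>x u x' u'. cl_traj f g umin umax k \<tau>p r x0 u0 \<tau> x u \<and>
                       cl_traj f g umin umax k \<tau>p r x0 u0 \<tau> x' u' \<longrightarrow>
             (\<forall>t. 0 \<le> t \<and> ereal t < \<tau> \<longrightarrow> x t = x' t \<and> u t = u' t))) \<and>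
       (\<forall>(T::real) x u.
          cl_traj f g umin umax k \<tau>p r x0 u0 (ereal T) x u \<and>
          \<not> (\<exists>\<tau>'::ereal. \<tau>' > ereal T \<and>
               (\<exists>x' u'. cl_traj f g umin umax k \<tau>p r x0 u0 \<tau>' x' u' \<and>
                  (\<forall>t\<in>{0..<T}. x' t = x t \<and> u' t = u t)))
          \<longrightarrow> Limsup (at_left T) (\<lambda>t. ereal (norm (x t))) = \<infinity>)"
    proof (intro conjI allI impI)
      show "\<exists>\<tau>::ereal. \<tau> > 0 \<and>
          (\<exists>x u. cl_traj f g umin umax k \<tau>p r x0 u0 \<tau> x u) \<and>
          (\<forall>x u x' u'. cl_traj f g umin umax k \<tau>p r x0 u0 \<tau> x u \<and>
                       cl_traj f g umin umax k \<tau>p r x0 u0 \<tau> x' u' \<longrightarrow>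
             (\<forall>t. 0 \<le> t \<and> ereal t < \<tau> \<longrightarrow> x t = x' t \<and> u t = u' t))"
        by (rule main_exist)
      fix T :: real and x :: "real \<Rightarrow> real^'n" and u :: "real \<Rightarrow> real"
      assume h: "cl_traj f g umin umax k \<tau>p r x0 u0 (ereal T) x u \<and>
          \<not> (\<exists>\<tau>'::ereal. \<tau>' > ereal T \<and>
               (\<exists>x' u'. cl_traj f g umin umax k \<tau>p r x0 u0 \<tau>' x' u' \<and>
                  (\<forall>t\<in>{0..<T}. x' t = x t \<and> u' t = u t)))"
      show "Limsup (at_left T) (\<lambda>t. ereal (norm (x t))) = \<infinity>"
        by (rule main_blowup) (use h in auto)
    qed
  qed
qed

end
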